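(* Let $R\subseteq S$ be as in the context, let $n=n_1+\cdots+n_\ell$, and let $\mathcal{C}\subseteq S^n$ be any code (linear or not) such that $k=\log_{|S|}|\mathcal{C}|$ is a positive integer. Then $\mathcal{C}$ is MSRD over $R$ for the length partition $n=n_1+\cdots+n_\ell$ if and only if, for all invertible matrices $A_i\in R^{n_i\times n_i}$ ($i=1,\ldots,\ell$), the code $\mathcal{C}\,{\rm Diag}(A_1,\ldots,A_\ell)=\{\mathbf{c}\,{\rm Diag}(A_1,\ldots,A_\ell):\mathbf{c}\in\mathcal{C}\}$ is MDS.
   Context: $R$ is a finite commutative chain ring with maximal ideal $\mathfrak{m}$; $S=R[x]/(h)$ with $h\in R[x]$ monic of degree $m$ irreducible modulo $\mathfrak{m}$, a free $R$-module of rank $m$. Rank: for $\mathbf{u}\in S^s$, fix an $R$-basis $\alpha_1,\ldots,\alpha_m$ of $S$ and write $\mathbf{u}=\sum_{i=1}^m\alpha_i(c_{i,1},\ldots,c_{i,s})$ with $c_{i,j}\in R$; ${\rm rk}(\mathbf{u})$ is the number of nonzero diagonal entries in the Smith normal form of $(c_{i,j})\in R^{m\times s}$. For $\mathbf{c}=(\mathbf{c}^{(1)},\ldots,\mathbf{c}^{(\ell)})\in S^n$ with $\mathbf{c}^{(i)}\in S^{n_i}$, ${\rm wt}_{SR}(\mathbf{c})=\sum_i{\rm rk}(\mathbf{c}^{(i)})$ and ${\rm d}_{SR}(\mathcal{C})$ is the minimum of ${\rm wt}_{SR}(\mathbf{c}-\mathbf{d})$ over distinct $\mathbf{c},\mathbf{d}\in\mathcal{C}$.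 $\mathcal{C}$ is MSRD if $k$ is a positive integer and ${\rm d}_{SR}(\mathcal{C})=n-k+1$. A code $\mathcal{D}\subseteq S^n$ with $\log_{|S|}|\mathcal{D}|=k$ is MDS if its minimum Hamming distance equals $n-k+1$. *)

theory Defs
  imports "HOL-Computational_Algebra.Polynomial"
begin

definition r_ideal :: "'r::comm_ring_1 set \<Rightarrow> bool" where
  "r_ideal I \<longleftrightarrow> 0 \<in> I \<and> (\<forall>a\<in>I. \<forall>b\<in>I. a + b \<in> I) \<and> (\<forall>r. \<forall>a\<in>I. r * a \<in> I)"

definition maximal_r_ideal :: "'r::comm_ring_1 set \<Rightarrow> bool" where
  "maximal_r_ideal M \<longleftrightarrow> r_ideal M \<and> M \<noteq> UNIV \<and>
     (\<forall>J. r_ideal J \<and> M \<subseteq> J \<longrightarrow> J = M \<or> J = UNIV)"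

definition chain_ring :: "'r::comm_ring_1 itself \<Rightarrow> bool" where
  "chain_ring _ \<longleftrightarrow> (0::'r) \<noteq> 1 \<and>
     (\<forall>I J :: 'r set. r_ideal I \<and> r_ideal J \<longrightarrow> I \<subseteq> J \<or> J \<subseteq> I)"

definition max_ideal :: "'r::comm_ring_1 set" where
  "max_ideal = (THE M. maximal_r_ideal M)"

section \<open>Polynomials modulo the maximal ideal, i.e. the ring (R/m)[x]\<close>

definition cong_m :: "'r::comm_ring_1 poly \<Rightarrow> 'r poly \<Rightarrow> bool" where
  "cong_m f g \<longleftrightarrow> (\<forall>i. coeff f i - coeff g i \<in> max_ideal)"

definition unit_mod_m :: "'r::comm_ring_1 poly \<Rightarrow> bool" where
  "unit_mod_m f \<longleftrightarrow> (\<exists>g. cong_m (f * g) 1)"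

definition irred_mod_m :: "'r::comm_ring_1 poly \<Rightarrow> bool" where
  "irred_mod_m h \<longleftrightarrow> \<not> cong_m h 0 \<and> \<not> unit_mod_m h \<and>
     (\<forall>f g. cong_m h (f * g) \<longrightarrow> unit_mod_m f \<or> unit_mod_m g)"

section \<open>S = R[x]/(h), elements represented by their reduced representatives (degree < deg h)\<close>

definition S_set :: "'r::comm_ring_1 poly \<Rightarrow> 'r poly set" where
  "S_set h = {p. degree p < degree h}"

definition is_R_basis :: "'r::comm_ring_1 poly \<Rightarrow> (nat \<Rightarrow> 'r poly) \<Rightarrow> bool" where
  "is_R_basis h \<alpha> \<longleftrightarrow> (\<forall>k<degree h. \<alpha> k \<in> S_set h) \<and>
     (\<forall>p\<in>S_set h. \<exists>!c. (\<forall>k\<ge>degree h. c k = 0) \<and>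
                      p = (\<Sum>k<degree h. smult (c k) (\<alpha> k)))"

definition coords :: "'r::comm_ring_1 poly \<Rightarrow> (nat \<Rightarrow> 'r poly) \<Rightarrow> 'r poly \<Rightarrow> nat \<Rightarrow> 'r" where
  "coords h \<alpha> p = (SOME c. (\<forall>k\<ge>degree h. c k = 0) \<and>
                      p = (\<Sum>k<degree h. smult (c k) (\<alpha> k)))"

section \<open>Matrices over R (as functions, with explicit dimensions) and Smith normal form\<close>

definition inv_mat :: "nat \<Rightarrow> (nat \<Rightarrow> nat \<Rightarrow> 'r::comm_ring_1) \<Rightarrow> bool" where
  "inv_mat n A \<longleftrightarrow> (\<exists>B. \<forall>i<n. \<forall>j<n.
      (\<Sum>k<n. A i k * B k j) = (if i = j then 1 else 0) \<and>
      (\<Sum>k<n. B i k * A k j) = (if i = j then 1 else 0))"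

definition is_snf :: "nat \<Rightarrow> nat \<Rightarrow> (nat \<Rightarrow> nat \<Rightarrow> 'r::comm_ring_1) \<Rightarrow> (nat \<Rightarrow> nat \<Rightarrow> 'r) \<Rightarrow> bool" where
  "is_snf a b C D \<longleftrightarrow>
     (\<exists>P Q. inv_mat a P \<and> inv_mat b Q \<and>
        (\<forall>i<a. \<forall>j<b. D i j = (\<Sum>u<a. \<Sum>v<b. P i u * C u v * Q v j))) \<and>
     (\<forall>i<a. \<forall>j<b. i \<noteq> j \<longrightarrow> D i j = 0) \<and>
     (\<forall>i. Suc i < min a b \<longrightarrow> D i i dvd D (Suc i) (Suc i))"

definition snf_rank :: "nat \<Rightarrow> nat \<Rightarrow> (nat \<Rightarrow> nat \<Rightarrow> 'r::comm_ring_1) \<Rightarrow> nat" where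
  "snf_rank a b C = (SOME r. \<exists>D. is_snf a b C D \<and> r = card {i. i < min a b \<and> D i i \<noteq> 0})"

definition rk :: "'r::comm_ring_1 poly \<Rightarrow> (nat \<Rightarrow> 'r poly) \<Rightarrow> nat \<Rightarrow> (nat \<Rightarrow> 'r poly) \<Rightarrow> nat" where
  "rk h \<alpha> s u = snf_rank (degree h) s (\<lambda>i j. coords h \<alpha> (u j) i)"

definition Sn :: "'r::comm_ring_1 poly \<Rightarrow> nat \<Rightarrow> (nat \<Rightarrow> 'r poly) set" where
  "Sn h n = {c. (\<forall>j<n. c j \<in> S_set h) \<and> (\<forall>j\<ge>n. c j = 0)}"

definition offs :: "nat list \<Rightarrow> nat \<Rightarrow> nat" where
  "offs ns i = sum_list (take i ns)"

definition wt_SR :: "'r::comm_ring_1 poly \<Rightarrow> (nat \<Rightarrow> 'r poly) \<Rightarrow> nat list \<Rightarrow> (nat \<Rightarrow> 'r poly) \<Rightarrow> nat" where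
  "wt_SR h \<alpha> ns c = (\<Sum>i<length ns. rk h \<alpha> (ns ! i) (\<lambda>j. c (offs ns i + j)))"

definition d_SR :: "'r::comm_ring_1 poly \<Rightarrow> (nat \<Rightarrow> 'r poly) \<Rightarrow> nat list \<Rightarrow> (nat \<Rightarrow> 'r poly) set \<Rightarrow> nat" where
  "d_SR h \<alpha> ns C = Min {wt_SR h \<alpha> ns (\<lambda>j. c j - d j) | c d. c \<in> C \<and> d \<in> C \<and> c \<noteq> d}"

definition is_MSRD :: "'r::comm_ring_1 poly \<Rightarrow> (nat \<Rightarrow> 'r poly) \<Rightarrow> nat list \<Rightarrow> (nat \<Rightarrow> 'r poly) set \<Rightarrow> bool" where
  "is_MSRD h \<alpha> ns C \<longleftrightarrow> (\<exists>k::nat. k > 0 \<and> log (card (S_set h)) (card C) = real k \<and>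
      d_SR h \<alpha> ns C = sum_list ns - k + 1)"

definition d_H :: "nat \<Rightarrow> (nat \<Rightarrow> 'a::zero) set \<Rightarrow> nat" where
  "d_H n D = Min {card {j. j < n \<and> c j \<noteq> d j} | c d. c \<in> D \<and> d \<in> D \<and> c \<noteq> d}"

definition is_MDS :: "'r::comm_ring_1 poly \<Rightarrow> nat \<Rightarrow> (nat \<Rightarrow> 'r poly) set \<Rightarrow> bool" where
  "is_MDS h n D \<longleftrightarrow> real (d_H n D) = real n - log (card (S_set h)) (card D) + 1"

definition block_diag :: "nat list \<Rightarrow> (nat \<Rightarrow> nat \<Rightarrow> nat \<Rightarrow> 'r::comm_ring_1) \<Rightarrow> nat \<Rightarrow> nat \<Rightarrow> 'r" where
  "block_diag ns As t j = (\<Sum>i<length ns.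
      if offs ns i \<le> t \<and> t < offs ns i + ns ! i \<and> offs ns i \<le> j \<and> j < offs ns i + ns ! i
      then As i (t - offs ns i) (j - offs ns i) else 0)"

definition vec_mat :: "nat \<Rightarrow> (nat \<Rightarrow> 'r::comm_ring_1 poly) \<Rightarrow> (nat \<Rightarrow> nat \<Rightarrow> 'r) \<Rightarrow> nat \<Rightarrow> 'r poly" where
  "vec_mat n c M = (\<lambda>j. if j < n then (\<Sum>t<n. smult (M t j) (c t)) else 0)"

end

theory Submission
  imports Defs "Jordan_Normal_Form.Determinant"
begin

definition idm :: "nat \<Rightarrow> nat \<Rightarrow> 'r::comm_ring_1" where
  "idm i j = (if i = j then 1 else 0)"

definition mm :: "nat \<Rightarrow> (nat \<Rightarrow> nat \<Rightarrow> 'r::comm_ring_1) \<Rightarrow> (nat \<Rightarrow> nat \<Rightarrow> 'r) \<Rightarrow> nat \<Rightarrow> nat \<Rightarrow> 'r" where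
  "mm n A B i j = (\<Sum>k<n. A i k * B k j)"

definition eqon :: "nat \<Rightarrow> nat \<Rightarrow> (nat \<Rightarrow> nat \<Rightarrow> 'r) \<Rightarrow> (nat \<Rightarrow> nat \<Rightarrow> 'r) \<Rightarrow> bool" where
  "eqon a b A B \<longleftrightarrow> (\<forall>i<a. \<forall>j<b. A i j = B i j)"

lemma eqon_refl[simp]: "eqon a b A A" by (simp add: eqon_def)
lemma eqon_sym: "eqon a b A B \<Longrightarrow> eqon a b B A" by (simp add: eqon_def)
lemma eqon_trans[trans]: "eqon a b A B \<Longrightarrow> eqon a b B C \<Longrightarrow> eqon a b A C" by (simp add: eqon_def)
lemma eqon_eq_trans[trans]: "eqon a b A B \<Longrightarrow> B = C \<Longrightarrow> eqon a b A C" by simp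
lemma eq_eqon_trans[trans]: "A = B \<Longrightarrow> eqon a b B C \<Longrightarrow> eqon a b A C" by simp

lemma mm_assoc: "mm n (mm m A B) C = mm m A (mm n B C)"
proof (intro ext)
  fix i j
  have "mm n (mm m A B) C i j = (\<Sum>k<n. \<Sum>l<m. A i l * B l k * C k j)"
    by (simp add: mm_def sum_distrib_right)
  also have "\<dots> = (\<Sum>l<m. \<Sum>k<n. A i l * B l k * C k j)" by (rule sum.swap)
  also have "\<dots> = mm m A (mm n B C) i j"
    by (simp add: mm_def sum_distrib_left mult.assoc)
  finally show "mm n (mm m A B) C i j = mm m A (mm n B C) i j" .
qed

lemma eqon_mm: "eqon a n A A' \<Longrightarrow> eqon n b B B' \<Longrightarrow> eqon a b (mm n A B) (mm n A' B')"
  unfolding eqon_def mm_def by (auto intro!: sum.cong)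

lemma sum_delta_l: fixes n :: nat shows "(\<Sum>k<n. (if i = k then 1 else 0) * f k) = (if i < n then f i else (0::'a::comm_ring_1))"
  by (induct n) (auto simp: less_Suc_eq)
lemma sum_delta_r: fixes n :: nat shows "(\<Sum>k<n. f k * (if k = j then 1 else 0)) = (if j < n then f j else (0::'a::comm_ring_1))"
  by (induct n) (auto simp: less_Suc_eq)

lemma mm_idm_left: "eqon n b (mm n idm B) B"
  unfolding eqon_def mm_def idm_def by (simp add: sum_delta_l)

lemma mm_idm_right: "eqon a n (mm n A idm) A"
  unfolding eqon_def mm_def idm_def by (simp add: sum_delta_r)

lemma inv_mat_iff: "inv_mat n A \<longleftrightarrow> (\<exists>B. eqon n n (mm n A B) idm \<and> eqon n n (mm n B A) idm)"
  unfolding inv_mat_def eqon_def mm_def idm_def by blast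

lemma inv_mat_idm: "inv_mat n idm"
  unfolding inv_mat_iff using mm_idm_left by blast

lemma inv_mat_mult:
  assumes "inv_mat n A" "inv_mat n B" shows "inv_mat n (mm n A B)"
proof -
  obtain A' where A': "eqon n n (mm n A A') idm" "eqon n n (mm n A' A) idm" using assms(1) inv_mat_iff by blast
  obtain B' where B': "eqon n n (mm n B B') idm" "eqon n n (mm n B' B) idm" using assms(2) inv_mat_iff by blast
  have "mm n (mm n A B) (mm n B' A') = mm n A (mm n (mm n B B') A')" by (simp add: mm_assoc)
  also have "eqon n n \<dots> (mm n A (mm n idm A'))" by (intro eqon_mm B' eqon_refl)
  also have "eqon n n \<dots> (mm n A A')" by (intro eqon_mm mm_idm_left eqon_refl)
  also have "eqon n n \<dots> idm" by (rule A')
  finally have 1: "eqon n n (mm n (mm n A B) (mm n B' A')) idm" .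
  have "mm n (mm n B' A') (mm n A B) = mm n B' (mm n (mm n A' A) B)" by (simp add: mm_assoc)
  also have "eqon n n \<dots> (mm n B' (mm n idm B))" by (intro eqon_mm A' eqon_refl)
  also have "eqon n n \<dots> (mm n B' B)" by (intro eqon_mm mm_idm_left eqon_refl)
  also have "eqon n n \<dots> idm" by (rule B')
  finally have 2: "eqon n n (mm n (mm n B' A') (mm n A B)) idm" .
  show ?thesis using 1 2 inv_mat_iff by blast
qed

definition eqv :: "nat \<Rightarrow> nat \<Rightarrow> (nat \<Rightarrow> nat \<Rightarrow> 'r::comm_ring_1) \<Rightarrow> (nat \<Rightarrow> nat \<Rightarrow> 'r) \<Rightarrow> bool" where
  "eqv a b C D \<longleftrightarrow> (\<exists>P Q. inv_mat a P \<and> inv_mat b Q \<and> eqon a b D (mm b (mm a P C) Q))"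

lemma double_sum_mm: "(\<Sum>u<a. \<Sum>v<b. P i u * C u v * Q v j) = mm b (mm a P C) Q i j"
proof -
  have "mm b (mm a P C) Q i j = (\<Sum>v<b. \<Sum>u<a. P i u * C u v * Q v j)"
    by (simp add: mm_def sum_distrib_right)
  also have "\<dots> = (\<Sum>u<a. \<Sum>v<b. P i u * C u v * Q v j)" by (rule sum.swap)
  finally show ?thesis by simp
qed

lemma is_snf_eqv: "is_snf a b C D \<longleftrightarrow> eqv a b C D \<and> (\<forall>i<a. \<forall>j<b. i \<noteq> j \<longrightarrow> D i j = 0) \<and>
     (\<forall>i. Suc i < min a b \<longrightarrow> D i i dvd D (Suc i) (Suc i))"
  unfolding is_snf_def eqv_def eqon_def double_sum_mm by simp

lemma eqv_refl: "eqv a b C C"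
proof -
  have "eqon a b C (mm a idm C)" by (rule eqon_sym[OF mm_idm_left])
  also have "eqon a b \<dots> (mm b (mm a idm C) idm)" by (rule eqon_sym[OF mm_idm_right])
  finally show ?thesis unfolding eqv_def using inv_mat_idm by blast
qed

lemma eqv_trans:
  assumes "eqv a b C D" "eqv a b D E" shows "eqv a b C E"
proof -
  obtain P Q where PQ: "inv_mat a P" "inv_mat b Q" "eqon a b D (mm b (mm a P C) Q)"
    using assms(1) eqv_def by blast
  obtain P' Q' where PQ': "inv_mat a P'" "inv_mat b Q'" "eqon a b E (mm b (mm a P' D) Q')"
    using assms(2) eqv_def by blast
  have "eqon a b E (mm b (mm a P' D) Q')" by (rule PQ'(3))
  also have "eqon a b \<dots> (mm b (mm a P' (mm b (mm a P C) Q)) Q')"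
    by (intro eqon_mm PQ(3) eqon_refl)
  also have "\<dots> = mm b (mm a (mm a P' P) C) (mm b Q Q')" by (simp add: mm_assoc)
  finally show ?thesis unfolding eqv_def using PQ PQ' inv_mat_mult by blast
qed

lemma eqv_sym:
  assumes "eqv a b C D" shows "eqv a b D C"
proof -
  obtain P Q where PQ: "inv_mat a P" "inv_mat b Q" "eqon a b D (mm b (mm a P C) Q)"
    using assms(1) eqv_def by blast
  obtain P' where P': "eqon a a (mm a P P') idm" "eqon a a (mm a P' P) idm" using PQ(1) inv_mat_iff by blast
  obtain Q' where Q': "eqon b b (mm b Q Q') idm" "eqon b b (mm b Q' Q) idm" using PQ(2) inv_mat_iff by blast
  have P'i: "inv_mat a P'" using P' inv_mat_iff by blast
  have Q'i: "inv_mat b Q'" using Q' inv_mat_iff by blast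
  have "eqon a b C (mm a idm C)" by (rule eqon_sym[OF mm_idm_left])
  also have "eqon a b \<dots> (mm b (mm a idm C) idm)" by (rule eqon_sym[OF mm_idm_right])
  also have "eqon a b \<dots> (mm b (mm a (mm a P' P) C) (mm b Q Q'))"
    by (intro eqon_mm eqon_sym[OF P'(2)] eqon_sym[OF Q'(1)] eqon_refl)
  also have "\<dots> = mm b (mm a P' (mm b (mm a P C) Q)) Q'" by (simp add: mm_assoc)
  also have "eqon a b \<dots> (mm b (mm a P' D) Q')"
    by (intro eqon_mm eqon_sym[OF PQ(3)] eqon_refl)
  finally show ?thesis unfolding eqv_def using P'i Q'i by blast
qed

lemma eqv_cong: "eqon a b C C' \<Longrightarrow> eqv a b C D \<longleftrightarrow> eqv a b C' D"
proof -
  assume h: "eqon a b C C'"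
  have "\<And>P Q. eqon a b (mm b (mm a P C) Q) (mm b (mm a P C') Q)"
    by (intro eqon_mm h eqon_refl)
  then show ?thesis unfolding eqv_def using eqon_trans eqon_sym by meson
qed

definition sw :: "nat \<Rightarrow> nat \<Rightarrow> nat \<Rightarrow> nat" where
  "sw k p i = (if i = k then p else if i = p then k else i)"

lemma sw_sw[simp]: "sw k p (sw k p i) = i" by (simp add: sw_def)
lemma sw_lt: "k < a \<Longrightarrow> p < a \<Longrightarrow> i < a \<Longrightarrow> sw k p i < a" by (simp add: sw_def)

definition pm :: "(nat \<Rightarrow> nat) \<Rightarrow> nat \<Rightarrow> nat \<Rightarrow> 'r::comm_ring_1" where
  "pm \<sigma> i j = (if \<sigma> i = j then 1 else 0)"

lemma sum_delta_l2: fixes n :: nat shows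
  "(\<Sum>k<n. (if s = k then 1 else 0) * f k) = (if s < n then f s else (0::'a::comm_ring_1))"
  by (induct n) (auto simp: less_Suc_eq)

lemma pm_left: "k < a \<Longrightarrow> p < a \<Longrightarrow> i < a \<Longrightarrow> mm a (pm (sw k p)) B i j = B (sw k p i) j"
  unfolding mm_def pm_def by (simp add: sum_delta_l2 sw_lt)

lemma sw_eq_iff: "(sw k p t = j) = (t = sw k p j)" by (auto simp: sw_def)

lemma pm_right: "k < b \<Longrightarrow> q < b \<Longrightarrow> j < b \<Longrightarrow> mm b B (pm (sw k q)) i j = B i (sw k q j)"
  unfolding mm_def pm_def sw_eq_iff by (simp add: sum_delta_r sw_lt)

lemma inv_pm: assumes "k < a" "p < a" shows "inv_mat a (pm (sw k p))"
proof -
  have "eqon a a (mm a (pm (sw k p)) (pm (sw k p))) idm"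
    unfolding eqon_def using assms by (simp add: pm_left sw_lt) (simp add: pm_def idm_def)
  then show ?thesis unfolding inv_mat_iff by blast
qed

lemma eqv_swap_rows: assumes "k < a" "p < a" shows "eqv a b D (\<lambda>i j. D (sw k p i) j)"
proof -
  have "eqon a b (\<lambda>i j. D (sw k p i) j) (mm a (pm (sw k p)) D)"
    unfolding eqon_def using assms by (simp add: pm_left)
  also have "eqon a b \<dots> (mm b (mm a (pm (sw k p)) D) idm)" by (rule eqon_sym[OF mm_idm_right])
  finally show ?thesis unfolding eqv_def using inv_pm[OF assms] inv_mat_idm by blast
qed

lemma eqv_swap_cols: assumes "k < b" "q < b" shows "eqv a b D (\<lambda>i j. D i (sw k q j))"
proof -
  have "eqon a b (\<lambda>i j. D i (sw k q j)) (mm b D (pm (sw k q)))"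
    unfolding eqon_def using assms by (simp add: pm_right)
  also have "eqon a b \<dots> (mm b (mm a idm D) (pm (sw k q)))"
    by (intro eqon_mm eqon_sym[OF mm_idm_left] eqon_refl)
  finally show ?thesis unfolding eqv_def using inv_pm[OF assms] inv_mat_idm by blast
qed

definition lr :: "(nat \<Rightarrow> 'r) \<Rightarrow> nat \<Rightarrow> nat \<Rightarrow> nat \<Rightarrow> 'r::comm_ring_1" where
  "lr x k i j = idm i j + (if j = k \<and> i \<noteq> k then x i else 0)"

definition lc :: "(nat \<Rightarrow> 'r) \<Rightarrow> nat \<Rightarrow> nat \<Rightarrow> nat \<Rightarrow> 'r::comm_ring_1" where
  "lc x k i j = idm i j + (if i = k \<and> j \<noteq> k then x j else 0)"

lemma sum_single: fixes n :: nat shows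
  "(\<Sum>t<n. (if t = k \<and> c then g t else 0)) = (if k < n \<and> c then g k else (0::'a::comm_ring_1))"
  by (induct n) (auto simp: less_Suc_eq)

lemma lr_left: assumes "k < a" "i < a"
  shows "mm a (lr x k) B i j = B i j + (if i \<noteq> k then x i * B k j else 0)"
proof -
  have "mm a (lr x k) B i j = (\<Sum>t<a. idm i t * B t j) + (\<Sum>t<a. (if t = k \<and> i \<noteq> k then x i * B t j else 0))"
    unfolding mm_def lr_def by (simp add: distrib_right sum.distrib if_distrib[of "\<lambda>z. z * _"] cong: if_cong)
  also have "\<dots> = B i j + (if i \<noteq> k then x i * B k j else 0)"
    using assms by (simp add: sum_single idm_def sum_delta_l)
  finally show ?thesis .
qed

lemma lc_right: assumes "k < b" "j < b"
  shows "mm b B (lc x k) i j = B i j + (if j \<noteq> k then B i k * x j else 0)"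
proof -
  have "mm b B (lc x k) i j = (\<Sum>t<b. B i t * idm t j) + (\<Sum>t<b. (if t = k \<and> j \<noteq> k then B i t * x j else 0))"
    unfolding mm_def lc_def by (simp add: distrib_left sum.distrib if_distrib[of "\<lambda>z. _ * z"] cong: if_cong)
  also have "\<dots> = B i j + (if j \<noteq> k then B i k * x j else 0)"
    using assms by (simp add: sum_single idm_def sum_delta_r)
  finally show ?thesis .
qed

lemma inv_lr: assumes "k < a" shows "inv_mat a (lr x k)"
proof -
  have 1: "eqon a a (mm a (lr x k) (lr (\<lambda>i. - x i) k)) idm"
    unfolding eqon_def using assms by (simp add: lr_left) (simp add: lr_def idm_def)
  have 2: "eqon a a (mm a (lr (\<lambda>i. - x i) k) (lr x k)) idm"
    unfolding eqon_def using assms by (simp add: lr_left) (simp add: lr_def idm_def)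
  show ?thesis using 1 2 unfolding inv_mat_iff by blast
qed

lemma inv_lc: assumes "k < b" shows "inv_mat b (lc x k)"
proof -
  have 1: "eqon b b (mm b (lc x k) (lc (\<lambda>i. - x i) k)) idm"
    unfolding eqon_def using assms by (simp add: lc_right) (simp add: lc_def idm_def)
  have 2: "eqon b b (mm b (lc (\<lambda>i. - x i) k) (lc x k)) idm"
    unfolding eqon_def using assms by (simp add: lc_right) (simp add: lc_def idm_def)
  show ?thesis using 1 2 unfolding inv_mat_iff by blast
qed

lemma eqv_lr: assumes "k < a"
  shows "eqv a b D (\<lambda>i j. D i j + (if i \<noteq> k then x i * D k j else 0))"
proof -
  have "eqon a b (\<lambda>i j. D i j + (if i \<noteq> k then x i * D k j else 0)) (mm a (lr x k) D)"
    unfolding eqon_def using assms by (simp add: lr_left)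
  also have "eqon a b \<dots> (mm b (mm a (lr x k) D) idm)" by (rule eqon_sym[OF mm_idm_right])
  finally show ?thesis unfolding eqv_def using inv_lr[OF assms] inv_mat_idm by blast
qed

lemma eqv_lc: assumes "k < b"
  shows "eqv a b D (\<lambda>i j. D i j + (if j \<noteq> k then D i k * x j else 0))"
proof -
  have "eqon a b (\<lambda>i j. D i j + (if j \<noteq> k then D i k * x j else 0)) (mm b D (lc x k))"
    unfolding eqon_def using assms by (simp add: lc_right)
  also have "eqon a b \<dots> (mm b (mm a idm D) (lc x k))"
    by (intro eqon_mm eqon_sym[OF mm_idm_left] eqon_refl)
  finally show ?thesis unfolding eqv_def using inv_lc[OF assms] inv_mat_idm by blast
qed

definition pinv :: "nat \<Rightarrow> nat \<Rightarrow> nat \<Rightarrow> (nat \<Rightarrow> nat \<Rightarrow> 'r::comm_ring_1) \<Rightarrow> bool" where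
  "pinv a b k D \<longleftrightarrow> (\<forall>i<a. \<forall>j<b. i \<noteq> j \<and> (i < k \<or> j < k) \<longrightarrow> D i j = 0) \<and>
     (\<forall>i<k. \<forall>u v. i \<le> u \<and> u < a \<and> i \<le> v \<and> v < b \<longrightarrow> D i i dvd D u v)"

lemma dvd_min_exists:
  fixes f :: "'b \<Rightarrow> 'r::comm_ring_1"
  assumes tot: "\<forall>x y::'r. x dvd y \<or> y dvd x" and "finite T" "T \<noteq> {}"
  shows "\<exists>t\<in>T. \<forall>s\<in>T. f t dvd f s"
  using assms(2,3)
proof (induction T rule: finite_ne_induct)
  case (singleton x) then show ?case by simp
next
  case (insert x F)
  then obtain t where t: "t \<in> F" "\<forall>s\<in>F. f t dvd f s" by blast
  show ?case
  proof (cases "f x dvd f t")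
    case True
    show ?thesis
    proof (intro bexI[of _ x] ballI)
      fix s assume "s \<in> insert x F"
      then show "f x dvd f s"
      proof
        assume "s \<in> F" then show ?thesis using True t(2) dvd_trans by blast
      qed simp
    qed simp
  next
    case False then have "f t dvd f x" using tot by blast
    then show ?thesis using t by blast
  qed
qed

lemma snf_step:
  fixes D :: "nat \<Rightarrow> nat \<Rightarrow> 'r::comm_ring_1"
  assumes tot: "\<forall>x y::'r. x dvd y \<or> y dvd x"
    and k: "k < a" "k < b" and inv: "pinv a b k D"
  shows "\<exists>D'. eqv a b D D' \<and> pinv a b (Suc k) D'"
proof (cases "\<forall>u v. k \<le> u \<and> u < a \<and> k \<le> v \<and> v < b \<longrightarrow> D u v = 0")
  case True
  have "pinv a b (Suc k) D"
    unfolding pinv_def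
  proof (intro conjI allI impI)
    fix i j assume "i < a" "j < b" "i \<noteq> j \<and> (i < Suc k \<or> j < Suc k)"
    show "D i j = 0"
    proof (cases "i < k \<or> j < k")
      case True2: True
      then show ?thesis using inv \<open>i < a\<close> \<open>j < b\<close> \<open>i \<noteq> j \<and> _\<close> unfolding pinv_def by blast
    next
      case False
      then have "k \<le> i" "k \<le> j" by auto
      then show ?thesis using True \<open>i < a\<close> \<open>j < b\<close> by blast
    qed
  next
    fix i u v assume "i < Suc k" "i \<le> u \<and> u < a \<and> i \<le> v \<and> v < b"
    show "D i i dvd D u v"
    proof (cases "i < k")
      case True2: True
      then show ?thesis using inv \<open>i \<le> u \<and> _\<close> unfolding pinv_def by blast
    next
      case False
      then have "i = k" using \<open>i < Suc k\<close> by simp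
      then have "D u v = 0" using True \<open>i \<le> u \<and> _\<close> by blast
      then show ?thesis by simp
    qed
  qed
  then show ?thesis using eqv_refl by blast
next
  case False
  let ?T = "{(u,v). k \<le> u \<and> u < a \<and> k \<le> v \<and> v < b}"
  have finT: "finite ?T" by (rule finite_subset[of _ "{..<a} \<times> {..<b}"]) auto
  have neT: "?T \<noteq> {}" using k by auto
  obtain p q where pq: "(p,q) \<in> ?T" "\<forall>(u,v)\<in>?T. D p q dvd D u v"
    using dvd_min_exists[OF tot finT neT, of "\<lambda>(u,v). D u v"] by auto
  have p: "k \<le> p" "p < a" and q: "k \<le> q" "q < b" using pq(1) by auto
  define D1 where "D1 = (\<lambda>i j. D (sw k p i) (sw k q j))"
  have e1: "eqv a b D D1"
  proof -
    have "eqv a b D (\<lambda>i j. D (sw k p i) j)" by (rule eqv_swap_rows) (use k p in auto)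
    moreover have "eqv a b (\<lambda>i j. D (sw k p i) j) D1"
      unfolding D1_def by (rule eqv_swap_cols) (use k q in auto)
    ultimately show ?thesis by (rule eqv_trans)
  qed
  define piv where "piv = D1 k k"
  have piv: "piv = D p q" unfolding piv_def D1_def sw_def by simp
  have swp_ge: "i \<le> sw k p u" if "i \<le> k" "i \<le> u" for i u using that p by (auto simp: sw_def)
  have swq_ge: "i \<le> sw k q u" if "i \<le> k" "i \<le> u" for i u using that q by (auto simp: sw_def)
  have swp_lt: "sw k p u < a" if "u < a" for u using that p k by (auto simp: sw_def)
  have swq_lt: "sw k q u < b" if "u < b" for u using that q k by (auto simp: sw_def)
  have swp_id: "sw k p u = u" if "u < k" for u using that p by (auto simp: sw_def)
  have swq_id: "sw k q u = u" if "u < k" for u using that q by (auto simp: sw_def)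
  have swp_k: "k \<le> sw k p u" if "k \<le> u" for u using that p by (auto simp: sw_def)
  have swq_k: "k \<le> sw k q u" if "k \<le> u" for u using that q by (auto simp: sw_def)
  have z1: "D1 i j = 0" if "i < a" "j < b" "i \<noteq> j" "i < k \<or> j < k" for i j
  proof -
    have "sw k p i \<noteq> sw k q j \<and> (sw k p i < k \<or> sw k q j < k)"
      using that p q by (auto simp: sw_def)
    moreover have c1: "\<forall>i<a. \<forall>j<b. i \<noteq> j \<and> (i < k \<or> j < k) \<longrightarrow> D i j = 0"
      using inv unfolding pinv_def by (rule conjunct1)
    ultimately show ?thesis unfolding D1_def
      using c1[rule_format, OF swp_lt[OF that(1)] swq_lt[OF that(2)]] by blast
  qed
  have d1: "D1 i i dvd D1 u v" if "i < k" "i \<le> u" "u < a" "i \<le> v" "v < b" for i u v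
  proof -
    have "D1 i i = D i i" unfolding D1_def using swp_id swq_id that by simp
    moreover have "D i i dvd D (sw k p u) (sw k q v)"
      using inv that swp_ge swq_ge swp_lt swq_lt unfolding pinv_def by simp
    ultimately show ?thesis unfolding D1_def by simp
  qed
  have dp: "piv dvd D1 u v" if "k \<le> u" "u < a" "k \<le> v" "v < b" for u v
  proof -
    have mem: "(sw k p u, sw k q v) \<in> ?T" using that swp_k swq_k swp_lt swq_lt by auto
    show ?thesis using bspec[OF pq(2) mem] unfolding piv D1_def by simp
  qed
  define y where "y = (\<lambda>i. SOME t. D1 i k = piv * t)"
  have y: "D1 i k = piv * y i" if "k \<le> i" "i < a" for i
  proof -
    have "\<exists>t. D1 i k = piv * t" using dp[OF that] k by (auto simp: dvd_def)
    then show ?thesis unfolding y_def by (rule someI_ex)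
  qed
  define y' where "y' = (\<lambda>j. SOME t. D1 k j = piv * t)"
  have y': "D1 k j = piv * y' j" if "k \<le> j" "j < b" for j
  proof -
    have "\<exists>t. D1 k j = piv * t" using dp[OF _ _ that] k by (auto simp: dvd_def)
    then show ?thesis unfolding y'_def by (rule someI_ex)
  qed
  define D2 where "D2 = (\<lambda>i j. D1 i j + (if i \<noteq> k then (if k < i then - y i else 0) * D1 k j else 0))"
  have e2: "eqv a b D1 D2" unfolding D2_def by (rule eqv_lr[OF k(1)])
  define D3 where "D3 = (\<lambda>i j. D2 i j + (if j \<noteq> k then D2 i k * (if k < j then - y' j else 0) else 0))"
  have e3: "eqv a b D2 D3" unfolding D3_def by (rule eqv_lc[OF k(2)])
  have D3f: "D3 u v = (D1 u v - (if k < u then y u * D1 k v else 0)) -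
      (if k < v then (D1 u k - (if k < u then y u * D1 k k else 0)) * y' v else 0)" for u v
    unfolding D3_def D2_def by auto
  have comb: "d dvd D3 u v" if "\<forall>u v. i \<le> u \<and> u < a \<and> i \<le> v \<and> v < b \<longrightarrow> d dvd D1 u v"
     "i \<le> k" "i \<le> u" "u < a" "i \<le> v" "v < b" for d i u v
  proof -
    have "d dvd D1 u v" "d dvd D1 k v" "d dvd D1 u k" "d dvd D1 k k"
      using that k by auto
    then show ?thesis unfolding D3f by (simp add: dvd_diff dvd_mult dvd_mult2)
  qed
  have "pinv a b (Suc k) D3"
    unfolding pinv_def
  proof (intro conjI allI impI)
    fix i j assume ij: "i < a" "j < b" "i \<noteq> j \<and> (i < Suc k \<or> j < Suc k)"
    show "D3 i j = 0"
    proof -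
      consider "i < k" | "i = k" "j < k" | "i = k" "k < j" | "k < i" "j < k" | "k < i" "j = k"
        using ij by linarith
      then show ?thesis
      proof cases
        case 1
        have "D1 i j = 0" by (rule z1) (use ij 1 in auto)
        moreover have "D1 i k = 0" by (rule z1) (use ij 1 k in auto)
        ultimately show ?thesis unfolding D3f using 1 by simp
      next
        case 2
        have "D1 k j = 0" by (rule z1) (use ij 2 k in auto)
        then show ?thesis unfolding D3f using 2 by simp
      next
        case 3
        have "D1 k j = piv * y' j" using y' 3 ij by simp
        then show ?thesis unfolding D3f using 3 by (simp add: piv_def)
      next
        case 4
        have "D1 i j = 0" by (rule z1) (use ij 4 in auto)
        moreover have "D1 k j = 0" by (rule z1) (use ij 4 k in auto)
        ultimately show ?thesis unfolding D3f using 4 by simp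
      next
        case 5
        have "D1 i k = piv * y i" using y 5 ij by simp
        then show ?thesis unfolding D3f using 5 by (simp add: piv_def mult.commute)
      qed
    qed
  next
    fix i u v assume iuv: "i < Suc k" "i \<le> u \<and> u < a \<and> i \<le> v \<and> v < b"
    show "D3 i i dvd D3 u v"
    proof (cases "i < k")
      case True
      have "D3 i i = D1 i i" unfolding D3f using True by simp
      moreover have "D1 i i dvd D3 u v"
      proof (rule comb[of i])
        show "\<forall>u v. i \<le> u \<and> u < a \<and> i \<le> v \<and> v < b \<longrightarrow> D1 i i dvd D1 u v"
          using d1[OF True] by blast
      qed (use True iuv in auto)
      ultimately show ?thesis by simp
    next
      case False
      then have ik: "i = k" using iuv by simp
      have "D3 i i = piv" unfolding D3f ik piv_def by simp
      moreover have "piv dvd D3 u v"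
      proof (rule comb[of k])
        show "\<forall>u v. k \<le> u \<and> u < a \<and> k \<le> v \<and> v < b \<longrightarrow> piv dvd D1 u v"
          using dp by blast
      qed (use ik iuv in auto)
      ultimately show ?thesis by simp
    qed
  qed
  moreover have "eqv a b D D3" using e1 e2 e3 eqv_trans by blast
  ultimately show ?thesis by blast
qed

lemma snf_exists_aux:
  fixes C :: "nat \<Rightarrow> nat \<Rightarrow> 'r::comm_ring_1"
  assumes tot: "\<forall>x y::'r. x dvd y \<or> y dvd x"
  shows "k \<le> min a b \<Longrightarrow> \<exists>D. eqv a b C D \<and> pinv a b k D"
proof (induction k)
  case 0
  have "pinv a b 0 C" unfolding pinv_def by simp
  then show ?case using eqv_refl by blast
next
  case (Suc k)
  then obtain D where D: "eqv a b C D" "pinv a b k D" by auto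
  obtain D' where "eqv a b D D'" "pinv a b (Suc k) D'"
    using snf_step[OF tot _ _ D(2)] Suc.prems by auto
  then show ?case using D eqv_trans by blast
qed

lemma snf_exists:
  fixes C :: "nat \<Rightarrow> nat \<Rightarrow> 'r::comm_ring_1"
  assumes tot: "\<forall>x y::'r. x dvd y \<or> y dvd x"
  shows "\<exists>D. is_snf a b C D"
proof -
  obtain D where D: "eqv a b C D" "pinv a b (min a b) D"
    using snf_exists_aux[OF tot, of "min a b" a b C] by auto
  have "\<forall>i<a. \<forall>j<b. i \<noteq> j \<longrightarrow> D i j = 0"
  proof (intro allI impI)
    fix i j assume ij: "i < a" "j < b" "i \<noteq> j"
    then have "i < min a b \<or> j < min a b" by (auto simp: min_def)
    then show "D i j = 0" using D(2) ij unfolding pinv_def by blast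
  qed
  moreover have "\<forall>i. Suc i < min a b \<longrightarrow> D i i dvd D (Suc i) (Suc i)"
    using D(2) unfolding pinv_def by auto
  ultimately show ?thesis using D(1) is_snf_eqv by blast
qed

definition ideal_like :: "'r::comm_ring_1 set \<Rightarrow> bool" where
  "ideal_like N \<longleftrightarrow> 0 \<in> N \<and> 1 \<notin> N \<and> (\<forall>x\<in>N. \<forall>y\<in>N. x + y \<in> N) \<and> (\<forall>x\<in>N. \<forall>y. y * x \<in> N)"

lemma il_sum: assumes "ideal_like N" "finite A" "\<forall>a\<in>A. f a \<in> N" shows "sum f A \<in> N"
  using assms(2,3)
proof (induction A rule: finite_induct)
  case empty then show ?case using assms(1) by (simp add: ideal_like_def)
next
  case (insert x F) then show ?case using assms(1) by (simp add: ideal_like_def)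
qed

lemma il_mult: "ideal_like N \<Longrightarrow> x \<in> N \<Longrightarrow> y * x \<in> N" by (simp add: ideal_like_def)
lemma il_mult2: "ideal_like N \<Longrightarrow> x \<in> N \<Longrightarrow> x * y \<in> N" by (metis il_mult mult.commute)
lemma il_add: "ideal_like N \<Longrightarrow> x \<in> N \<Longrightarrow> y \<in> N \<Longrightarrow> x + y \<in> N" by (simp add: ideal_like_def)

lemma il_prod1: assumes "ideal_like N" "finite A" "\<forall>a\<in>A. f a - 1 \<in> N" shows "prod f A - 1 \<in> N"
  using assms(2,3)
proof (induction A rule: finite_induct)
  case empty then show ?case using assms(1) by (simp add: ideal_like_def)
next
  case (insert x F)
  have eq: "prod f (insert x F) - 1 = (f x - 1) * prod f F + (prod f F - 1)"
    using insert(1,2) by (simp add: algebra_simps)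
  have a: "(f x - 1) * prod f F \<in> N" using insert assms(1) by (simp add: il_mult2)
  have b: "prod f F - 1 \<in> N" using insert by simp
  show ?case unfolding eq by (rule il_add[OF assms(1) a b])
qed

lemma det_near_id:
  fixes M :: "'r::comm_ring_1 mat"
  assumes N: "ideal_like N" and M: "M \<in> carrier_mat n n"
    and h: "\<forall>i<n. \<forall>j<n. M $$ (i,j) - (if i = j then 1 else 0) \<in> N"
  shows "det M - 1 \<in> N"
proof -
  let ?P = "{p. p permutes {0..<n}}"
  let ?t = "\<lambda>p. signof p * (\<Prod>i = 0..<n. M $$ (i, p i))"
  have fin: "finite ?P" by (simp add: finite_permutations)
  have idP: "id \<in> ?P" by (simp add: permutes_id)
  have eq: "det M = ?t id + sum ?t (?P - {id})"
    unfolding det_def'[OF M] by (rule sum.remove[OF fin idP])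
  have A: "?t id - 1 \<in> N"
  proof -
    have "(\<Prod>i = 0..<n. M $$ (i, id i)) - 1 \<in> N"
    proof (rule il_prod1[OF N])
      show "\<forall>a\<in>{0..<n}. M $$ (a, id a) - 1 \<in> N"
      proof
        fix a assume "a \<in> {0..<n}"
        then have "a < n" by simp
        then have "M $$ (a,a) - (if a = a then 1 else 0) \<in> N" using h by blast
        then show "M $$ (a, id a) - 1 \<in> N" by simp
      qed
    qed simp
    then show ?thesis by (simp add: signof_id)
  qed
  have B: "sum ?t (?P - {id}) \<in> N"
  proof (rule il_sum[OF N])
    show "finite (?P - {id})" using fin by simp
    show "\<forall>p\<in>?P - {id}. ?t p \<in> N"
    proof
      fix p assume p: "p \<in> ?P - {id}"
      then have pp: "p permutes {0..<n}" "p \<noteq> id" by auto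
      then obtain i where i: "p i \<noteq> i" by (auto simp: fun_eq_iff)
      then have "i \<in> {0..<n}" using pp(1) by (meson permutes_not_in)
      then have iin: "i < n" by simp
      have pin: "p i < n" using pp(1) iin by (meson atLeastLessThan_iff permutes_in_image zero_le)
      have "M $$ (i, p i) \<in> N" using h iin pin i by fastforce
      moreover have "(\<Prod>j = 0..<n. M $$ (j, p j)) = M $$ (i, p i) * (\<Prod>j \<in> {0..<n} - {i}. M $$ (j, p j))"
        using \<open>i \<in> {0..<n}\<close> by (simp add: prod.remove)
      ultimately have "(\<Prod>j = 0..<n. M $$ (j, p j)) \<in> N" using N il_mult2 by auto
      then show "?t p \<in> N" using N il_mult by auto
    qed
  qed
  have e2: "det M - 1 = (?t id - 1) + sum ?t (?P - {id})" unfolding eq by (simp add: algebra_simps)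
  show ?thesis unfolding e2 by (rule il_add[OF N A B])
qed

lemma det_zero_row:
  fixes M :: "'r::comm_ring_1 mat"
  assumes M: "M \<in> carrier_mat n n" and w: "w < n" and z: "\<forall>j<n. M $$ (w, j) = 0"
  shows "det M = 0"
proof -
  have "(\<Prod>i = 0..<n. M $$ (i, p i)) = 0" if "p permutes {0..<n}" for p
  proof -
    have "p w < n" using that w by (meson atLeastLessThan_iff permutes_in_image zero_le)
    then show ?thesis using w z by (intro prod_zero) auto
  qed
  then show ?thesis unfolding det_def'[OF M] by simp
qed

lemma rank_bound:
  fixes X :: "nat \<Rightarrow> nat \<Rightarrow> 'r::comm_ring_1" and Y :: "nat \<Rightarrow> nat \<Rightarrow> 'r"
  assumes N: "ideal_like N" and fI: "finite I" and fW: "finite W"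
    and h: "\<forall>i\<in>I. \<forall>i'\<in>I. (\<Sum>t\<in>W. X i t * Y t i') - (if i = i' then 1 else 0) \<in> N"
  shows "card I \<le> card W"
proof (rule ccontr)
  assume "\<not> card I \<le> card W"
  then have lt: "card W < card I" by simp
  define r where "r = card I"
  define w where "w = card W"
  obtain eI where eI: "bij_betw eI {0..<r} I" using ex_bij_betw_nat_finite[OF fI] r_def by blast
  obtain eW where eW: "bij_betw eW {0..<w} W" using ex_bij_betw_nat_finite[OF fW] w_def by blast
  define X' :: "'r mat" where "X' = mat r r (\<lambda>(i,l). if l < w then X (eI i) (eW l) else 0)"
  define Y' :: "'r mat" where "Y' = mat r r (\<lambda>(l,i). if l < w then Y (eW l) (eI i) else 0)"
  have wr: "w < r" using lt r_def w_def by simp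
  have cX: "X' \<in> carrier_mat r r" and cY: "Y' \<in> carrier_mat r r" by (auto simp: X'_def Y'_def)
  have dY: "det Y' = 0"
    by (rule det_zero_row[OF cY wr]) (simp add: Y'_def wr)
  have dM: "det (X' * Y') = 0" using det_mult[OF cX cY] dY by simp
  have entry: "(X' * Y') $$ (i,i') = (\<Sum>t\<in>W. X (eI i) t * Y t (eI i'))" if "i < r" "i' < r" for i i'
  proof -
    have "(X' * Y') $$ (i,i') = (\<Sum>l\<in>{0..<r}. X' $$ (i,l) * Y' $$ (l,i'))"
      using that cX cY by (simp add: scalar_prod_def)
    also have "\<dots> = (\<Sum>l\<in>{0..<r}. if l < w then X (eI i) (eW l) * Y (eW l) (eI i') else 0)"
      using that by (intro sum.cong) (auto simp: X'_def Y'_def)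
    also have "\<dots> = (\<Sum>l\<in>{0..<w}. X (eI i) (eW l) * Y (eW l) (eI i'))"
    proof -
      have se: "{0..<r} \<inter> {l. l < w} = {0..<w}" using wr by auto
      show ?thesis by (simp add: sum.If_cases se)
    qed
    also have "\<dots> = (\<Sum>t\<in>W. X (eI i) t * Y t (eI i'))"
      using sum.reindex_bij_betw[OF eW, of "\<lambda>t. X (eI i) t * Y t (eI i')"] by simp
    finally show ?thesis .
  qed
  have cM: "X' * Y' \<in> carrier_mat r r" using cX cY by simp
  have "det (X' * Y') - 1 \<in> N"
  proof (rule det_near_id[OF N cM], intro allI impI)
    fix i j assume ij: "i < r" "j < r"
    have "eI i \<in> I" "eI j \<in> I" using eI ij by (auto simp: bij_betw_def)
    moreover have e: "(eI i = eI j) = (i = j)" using eI ij unfolding bij_betw_def inj_on_def by auto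
    ultimately have "(\<Sum>t\<in>W. X (eI i) t * Y t (eI j)) - (if eI i = eI j then 1 else 0) \<in> N"
      using h by blast
    then show "(X' * Y') $$ (i,j) - (if i = j then 1 else 0) \<in> N"
      unfolding entry[OF ij] e .
  qed
  then have "- 1 \<in> N" using dM by simp
  then have "(-1) * (-1) \<in> N" using N il_mult by blast
  then show False using N by (simp add: ideal_like_def)
qed

lemma snf_rank_eqv:
  assumes "eqv a b C C'" shows "snf_rank a b C = snf_rank a b C'"
proof -
  have "is_snf a b C D \<longleftrightarrow> is_snf a b C' D" for D
    unfolding is_snf_eqv using assms eqv_sym eqv_trans by blast
  then show ?thesis unfolding snf_rank_def by simp
qed

lemma snf_rank_cong:
  assumes "eqon a b C C'" shows "snf_rank a b C = snf_rank a b C'"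
proof -
  have "is_snf a b C D \<longleftrightarrow> is_snf a b C' D" for D
    unfolding is_snf_eqv using eqv_cong[OF assms] by blast
  then show ?thesis unfolding snf_rank_def by simp
qed

lemma snf_rank_right:
  assumes "inv_mat b A" shows "snf_rank a b (mm b C A) = snf_rank a b C"
proof -
  have "eqon a b (mm b C A) (mm b (mm a idm C) A)"
    by (intro eqon_mm eqon_sym[OF mm_idm_left] eqon_refl)
  then have "eqv a b C (mm b C A)" unfolding eqv_def using assms inv_mat_idm by blast
  then show ?thesis using snf_rank_eqv by metis
qed

lemma snf_rank_spec:
  fixes C :: "nat \<Rightarrow> nat \<Rightarrow> 'r::comm_ring_1"
  assumes tot: "\<forall>x y::'r. x dvd y \<or> y dvd x"
  shows "\<exists>D. is_snf a b C D \<and> snf_rank a b C = card {i. i < min a b \<and> D i i \<noteq> 0}"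
proof -
  obtain D where "is_snf a b C D" using snf_exists[OF tot] by blast
  then have "\<exists>r. \<exists>D. is_snf a b C D \<and> r = card {i. i < min a b \<and> D i i \<noteq> 0}" by blast
  then have "\<exists>D. is_snf a b C D \<and> snf_rank a b C = card {i. i < min a b \<and> D i i \<noteq> 0}"
    unfolding snf_rank_def by (rule someI_ex)
  then show ?thesis .
qed

lemma diag_mm_left:
  assumes "\<forall>u<a. \<forall>j<b. u \<noteq> j \<longrightarrow> D u j = 0" "j < b"
  shows "mm a P D i j = (if j < a then P i j * D j j else 0)"
proof -
  have "mm a P D i j = (\<Sum>u<a. if u = j then P i u * D u j else 0)"
    unfolding mm_def using assms by (intro sum.cong) auto
  then show ?thesis by simp
qed

lemma diag_mm_right:
  assumes "\<forall>i<a. \<forall>v<b. i \<noteq> v \<longrightarrow> D i v = 0" "i < a"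
  shows "mm b D Q i t = (if i < b then D i i * Q i t else 0)"
proof -
  have "mm b D Q i t = (\<Sum>v<b. if v = i then D i v * Q v t else 0)"
    unfolding mm_def using assms by (intro sum.cong) auto
  then show ?thesis by simp
qed

lemma snf_rank_upper:
  fixes C :: "nat \<Rightarrow> nat \<Rightarrow> 'r::comm_ring_1"
  assumes tot: "\<forall>x y::'r. x dvd y \<or> y dvd x"
  shows "\<exists>Q. inv_mat b Q \<and> card {j. j < b \<and> (\<exists>i<a. mm b C Q i j \<noteq> 0)} \<le> snf_rank a b C"
proof -
  obtain D where D: "is_snf a b C D" "snf_rank a b C = card {i. i < min a b \<and> D i i \<noteq> 0}"
    using snf_rank_spec[OF tot] by blast
  obtain P Q where PQ: "inv_mat a P" "inv_mat b Q" "eqon a b D (mm b (mm a P C) Q)"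
    using D(1) unfolding is_snf_eqv eqv_def by blast
  have diag: "\<forall>u<a. \<forall>j<b. u \<noteq> j \<longrightarrow> D u j = 0" using D(1) unfolding is_snf_eqv by blast
  obtain P' where P': "eqon a a (mm a P' P) idm" using PQ(1) inv_mat_iff by blast
  have "eqon a b (mm b C Q) (mm a idm (mm b C Q))" by (rule eqon_sym[OF mm_idm_left])
  also have "eqon a b \<dots> (mm a (mm a P' P) (mm b C Q))" by (intro eqon_mm eqon_sym[OF P'] eqon_refl)
  also have "\<dots> = mm a P' (mm b (mm a P C) Q)" by (simp add: mm_assoc)
  also have "eqon a b \<dots> (mm a P' D)" by (intro eqon_mm eqon_sym[OF PQ(3)] eqon_refl)
  finally have e: "eqon a b (mm b C Q) (mm a P' D)" .
  have "{j. j < b \<and> (\<exists>i<a. mm b C Q i j \<noteq> 0)} \<subseteq> {i. i < min a b \<and> D i i \<noteq> 0}"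
  proof
    fix j assume "j \<in> {j. j < b \<and> (\<exists>i<a. mm b C Q i j \<noteq> 0)}"
    then obtain i where ij: "j < b" "i < a" "mm b C Q i j \<noteq> 0" by blast
    then have "mm a P' D i j \<noteq> 0" using e unfolding eqon_def by simp
    then have "j < a \<and> D j j \<noteq> 0" unfolding diag_mm_left[OF diag ij(1)] by (auto split: if_splits)
    then show "j \<in> {i. i < min a b \<and> D i i \<noteq> 0}" using ij by simp
  qed
  then have "card {j. j < b \<and> (\<exists>i<a. mm b C Q i j \<noteq> 0)} \<le> snf_rank a b C"
    unfolding D(2) by (intro card_mono) auto
  then show ?thesis using PQ(2) by blast
qed

definition nonunits :: "'r::comm_ring_1 set" where "nonunits = {x. \<not> x dvd 1}"

lemma nonunits_ideal:
  assumes tot: "\<forall>x y::'r::comm_ring_1. x dvd y \<or> y dvd x" and nz: "(0::'r) \<noteq> 1"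
  shows "ideal_like (nonunits :: 'r set)"
  unfolding ideal_like_def nonunits_def
proof (intro conjI ballI allI)
  show "(0::'r) \<in> {x. \<not> x dvd 1}" using nz by simp
  show "(1::'r) \<notin> {x. \<not> x dvd 1}" by simp
next
  fix x y :: 'r assume x: "x \<in> {x. \<not> x dvd 1}" and y: "y \<in> {x. \<not> x dvd 1}"
  show "x + y \<in> {x. \<not> x dvd 1}"
  proof (cases "x dvd y")
    case True
    then obtain c where "y = x * c" by (auto simp: dvd_def)
    then have "x + y = x * (1 + c)" by (simp add: algebra_simps)
    then have "x dvd x + y" by simp
    then show ?thesis using x dvd_trans[of x "x+y" 1] by blast
  next
    case False
    then have "y dvd x" using tot by blast
    then obtain c where "x = y * c" by (auto simp: dvd_def)
    then have "x + y = y * (1 + c)" by (simp add: algebra_simps)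
    then have "y dvd x + y" by simp
    then show ?thesis using y dvd_trans[of y "x+y" 1] by blast
  qed
next
  fix x y :: 'r assume x: "x \<in> {x. \<not> x dvd 1}"
  show "y * x \<in> {x. \<not> x dvd 1}" using x by (auto dest: dvd_mult_right)
qed

lemma chain_dvd:
  fixes D :: "nat \<Rightarrow> nat \<Rightarrow> 'r::comm_ring_1"
  assumes "\<forall>i. Suc i < m \<longrightarrow> D i i dvd D (Suc i) (Suc i)"
  shows "i \<le> l \<Longrightarrow> l < m \<Longrightarrow> D i i dvd D l l"
proof (induction l)
  case 0 then show ?case by simp
next
  case (Suc l)
  show ?case
  proof (cases "i = Suc l")
    case True then show ?thesis by simp
  next
    case False
    then have "D i i dvd D l l" using Suc by simp
    moreover have "D l l dvd D (Suc l) (Suc l)" using assms Suc.prems by simp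
    ultimately show ?thesis by (rule dvd_trans)
  qed
qed

lemma snf_rank_lower:
  fixes C :: "nat \<Rightarrow> nat \<Rightarrow> 'r::comm_ring_1"
  assumes tot: "\<forall>x y::'r. x dvd y \<or> y dvd x" and nz: "(0::'r) \<noteq> 1"
  shows "snf_rank a b C \<le> card {j. j < b \<and> (\<exists>i<a. C i j \<noteq> 0)}"
proof -
  have N: "ideal_like (nonunits :: 'r set)" by (rule nonunits_ideal[OF tot nz])
  obtain D where D: "is_snf a b C D" "snf_rank a b C = card {i. i < min a b \<and> D i i \<noteq> 0}"
    using snf_rank_spec[OF tot] by blast
  obtain P Q where PQ: "inv_mat a P" "inv_mat b Q" "eqon a b D (mm b (mm a P C) Q)"
    using D(1) unfolding is_snf_eqv eqv_def by blast
  have diag: "\<forall>u<a. \<forall>j<b. u \<noteq> j \<longrightarrow> D u j = 0" using D(1) unfolding is_snf_eqv by blast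
  have chain: "\<forall>i. Suc i < min a b \<longrightarrow> D i i dvd D (Suc i) (Suc i)" using D(1) unfolding is_snf_eqv by blast
  obtain Q' where Q': "eqon b b (mm b Q Q') idm" "eqon b b (mm b Q' Q) idm" using PQ(2) inv_mat_iff by blast
  define Z where "Z = {i. i < min a b \<and> D i i \<noteq> 0}"
  define W where "W = {j. j < b \<and> (\<exists>i<a. C i j \<noteq> 0)}"
  show ?thesis
  proof (cases "Z = {}")
    case True then show ?thesis unfolding D(2) Z_def[symmetric] by simp
  next
    case False
    have finZ: "finite Z" unfolding Z_def by simp
    define l where "l = Max Z"
    have lZ: "l \<in> Z" unfolding l_def using finZ False by (rule Max_in)
    have dl: "D i i dvd D l l" if "i \<in> Z" for i
      using chain_dvd[where m="min a b" and D=D, OF chain, of i l] that lZ finZ unfolding l_def Z_def by auto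
    have dlnz: "D l l \<noteq> 0" using lZ unfolding Z_def by simp
    have "eqon a b (mm b D Q') (mm b (mm b (mm a P C) Q) Q')" by (intro eqon_mm PQ(3) eqon_refl)
    also have "\<dots> = mm b (mm a P C) (mm b Q Q')" by (simp add: mm_assoc)
    also have "eqon a b \<dots> (mm b (mm a P C) idm)" by (intro eqon_mm Q'(1) eqon_refl)
    also have "eqon a b \<dots> (mm a P C)" by (rule mm_idm_right)
    finally have e: "eqon a b (mm b D Q') (mm a P C)" .
    have nu: "Q' i t \<in> nonunits" if "i \<in> Z" "t < b" "t \<notin> W" for i t
    proof -
      have ia: "i < a" "i < b" using that(1) unfolding Z_def by auto
      have dd: "D i i dvd D l l" using dl that(1) by blast
      have "mm a P C i t = 0" unfolding mm_def using that(2,3) unfolding W_def by auto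
      then have "mm b D Q' i t = 0" using e ia that(2) unfolding eqon_def by simp
      then have "D i i * Q' i t = 0" using diag_mm_right[OF diag ia(1)] ia by simp
      moreover obtain c where "D l l = D i i * c" using dd by (auto simp: dvd_def)
      ultimately have "D l l * Q' i t = 0" by (simp add: algebra_simps)
      show ?thesis
      proof (rule ccontr)
        assume "Q' i t \<notin> nonunits"
        then obtain e where "1 = Q' i t * e" by (auto simp: nonunits_def dvd_def)
        then have "D l l = D l l * Q' i t * e" by (simp add: mult.assoc)
        then show False using \<open>D l l * Q' i t = 0\<close> dlnz by simp
      qed
    qed
    have "card Z \<le> card W"
    proof (rule rank_bound[OF N finZ])
      show "finite W" unfolding W_def by simp
      show "\<forall>i\<in>Z. \<forall>i'\<in>Z. (\<Sum>t\<in>W. Q' i t * Q t i') - (if i = i' then 1 else 0) \<in> nonunits"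
      proof (intro ballI)
        fix i i' assume ii: "i \<in> Z" "i' \<in> Z"
        then have ib: "i < b" "i' < b" unfolding Z_def by auto
        have Wb: "W \<subseteq> {..<b}" unfolding W_def by auto
        have "(\<Sum>t<b. Q' i t * Q t i') = (if i = i' then 1 else 0)"
          using Q'(2) ib unfolding eqon_def mm_def idm_def by simp
        moreover have "(\<Sum>t<b. Q' i t * Q t i') = (\<Sum>t\<in>W. Q' i t * Q t i') + (\<Sum>t\<in>{..<b} - W. Q' i t * Q t i')"
          using sum.subset_diff[OF Wb] by (simp add: add.commute)
        moreover have rest: "(\<Sum>t\<in>{..<b} - W. Q' i t * Q t i') \<in> nonunits"
          by (rule il_sum[OF N]) (use nu ii il_mult2[OF N] in auto)
        ultimately have eq: "(\<Sum>t\<in>W. Q' i t * Q t i') - (if i = i' then 1 else 0) = - (\<Sum>t\<in>{..<b} - W. Q' i t * Q t i')"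
          by (simp add: algebra_simps)
        have "(-1) * (\<Sum>t\<in>{..<b} - W. Q' i t * Q t i') \<in> nonunits"
          by (rule il_mult[OF N]) (rule \<open>(\<Sum>t\<in>{..<b} - W. Q' i t * Q t i') \<in> nonunits\<close>)
        then show "(\<Sum>t\<in>W. Q' i t * Q t i') - (if i = i' then 1 else 0) \<in> nonunits" unfolding eq by simp
      qed
    qed
    then show ?thesis unfolding D(2) Z_def[symmetric] W_def[symmetric] .
  qed
qed

lemma chain_tot:
  assumes "chain_ring TYPE('r::comm_ring_1)"
  shows "\<forall>x y::'r. x dvd y \<or> y dvd x" and "(0::'r) \<noteq> 1"
proof -
  have cr: "\<forall>I J :: 'r set. r_ideal I \<and> r_ideal J \<longrightarrow> I \<subseteq> J \<or> J \<subseteq> I"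
    using assms unfolding chain_ring_def by blast
  have pi: "r_ideal (range (\<lambda>r. r * x))" for x :: 'r
    unfolding r_ideal_def
  proof (intro conjI ballI allI)
    show "0 \<in> range (\<lambda>r. r * x)" by (rule range_eqI[where x=0]) simp
  next
    fix u v assume "u \<in> range (\<lambda>r. r * x)" "v \<in> range (\<lambda>r. r * x)"
    then obtain r s where "u = r * x" "v = s * x" by auto
    then show "u + v \<in> range (\<lambda>r. r * x)" by (intro range_eqI[where x="r + s"]) (simp add: algebra_simps)
  next
    fix t u assume "u \<in> range (\<lambda>r. r * x)"
    then obtain r where "u = r * x" by auto
    then show "t * u \<in> range (\<lambda>r. r * x)" by (intro range_eqI[where x="t * r"]) (simp add: algebra_simps)
  qed
  show "\<forall>x y::'r. x dvd y \<or> y dvd x"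
  proof (intro allI)
    fix x y :: 'r
    have "range (\<lambda>r. r * x) \<subseteq> range (\<lambda>r. r * y) \<or> range (\<lambda>r. r * y) \<subseteq> range (\<lambda>r. r * x)"
      using cr pi by blast
    moreover have "x \<in> range (\<lambda>r. r * x)" "y \<in> range (\<lambda>r. r * y)" by (auto intro: range_eqI[where x=1])
    ultimately show "x dvd y \<or> y dvd x" by (auto simp: dvd_def mult.commute)
  qed
  show "(0::'r) \<noteq> 1" using assms unfolding chain_ring_def by blast
qed

lemma smult_sum_right: "Polynomial.smult c (sum f A) = (\<Sum>x\<in>A. Polynomial.smult c (f x))"
  by (induct A rule: infinite_finite_induct) (auto simp: smult_add_right)

lemma S_zero: "0 < degree h \<Longrightarrow> 0 \<in> S_set h" by (simp add: S_set_def)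
lemma S_add: "p \<in> S_set h \<Longrightarrow> q \<in> S_set h \<Longrightarrow> p + q \<in> S_set h"
  by (simp add: S_set_def degree_add_less)
lemma S_diff: "p \<in> S_set h \<Longrightarrow> q \<in> S_set h \<Longrightarrow> p - q \<in> S_set h"
  by (simp add: S_set_def degree_diff_less)
lemma S_smult: "p \<in> S_set h \<Longrightarrow> Polynomial.smult c p \<in> S_set h"
  unfolding S_set_def using degree_smult_le le_less_trans by blast
lemma S_sum: "0 < degree h \<Longrightarrow> (\<And>x. x \<in> A \<Longrightarrow> f x \<in> S_set h) \<Longrightarrow> sum f A \<in> S_set h"
  unfolding S_set_def using degree_sum_less[of A f "degree h"] by auto
lemma S_lin: "0 < degree h \<Longrightarrow> (\<And>t. t < s \<Longrightarrow> u t \<in> S_set h) \<Longrightarrow> (\<Sum>t<s. Polynomial.smult (A t) (u t)) \<in> S_set h"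
  by (rule S_sum) (auto intro: S_smult)

lemma coords_spec:
  assumes B: "is_R_basis h \<alpha>" and p: "p \<in> S_set h"
  shows "(\<forall>k\<ge>degree h. coords h \<alpha> p k = 0) \<and> p = (\<Sum>k<degree h. Polynomial.smult (coords h \<alpha> p k) (\<alpha> k))"
proof -
  have "\<exists>c. (\<forall>k\<ge>degree h. c k = 0) \<and> p = (\<Sum>k<degree h. Polynomial.smult (c k) (\<alpha> k))"
    using B p unfolding is_R_basis_def by blast
  then show ?thesis unfolding coords_def by (rule someI_ex)
qed

lemma coords_unique:
  assumes B: "is_R_basis h \<alpha>" and p: "p \<in> S_set h"
    and c: "\<forall>k\<ge>degree h. c k = 0" "p = (\<Sum>k<degree h. Polynomial.smult (c k) (\<alpha> k))"
  shows "coords h \<alpha> p = c"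
proof -
  have u: "\<exists>!c. (\<forall>k\<ge>degree h. c k = 0) \<and> p = (\<Sum>k<degree h. Polynomial.smult (c k) (\<alpha> k))"
    using B p unfolding is_R_basis_def by blast
  show ?thesis using u coords_spec[OF B p] c by blast
qed

lemma coords_zero:
  assumes B: "is_R_basis h \<alpha>" and d: "0 < degree h"
  shows "coords h \<alpha> 0 i = 0"
proof -
  have "coords h \<alpha> 0 = (\<lambda>_. 0)" by (rule coords_unique[OF B S_zero[OF d]]) auto
  then show ?thesis by simp
qed

lemma zero_if_coords:
  assumes B: "is_R_basis h \<alpha>" and p: "p \<in> S_set h" and z: "\<forall>i<degree h. coords h \<alpha> p i = 0"
  shows "p = 0"
proof -
  have "p = (\<Sum>k<degree h. Polynomial.smult (coords h \<alpha> p k) (\<alpha> k))" using coords_spec[OF B p] by blast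
  also have "\<dots> = 0" using z by simp
  finally show ?thesis .
qed

lemma coords_lin:
  assumes B: "is_R_basis h \<alpha>" and d: "0 < degree h" and u: "\<And>t. t < s \<Longrightarrow> u t \<in> S_set h"
  shows "coords h \<alpha> (\<Sum>t<s. Polynomial.smult (A t) (u t)) = (\<lambda>i. \<Sum>t<s. A t * coords h \<alpha> (u t) i)"
proof (rule coords_unique[OF B S_lin[OF d u]])
  show "\<forall>k\<ge>degree h. (\<Sum>t<s. A t * coords h \<alpha> (u t) k) = 0"
    using coords_spec[OF B u] by simp
  have "(\<Sum>t<s. Polynomial.smult (A t) (u t)) = (\<Sum>t<s. Polynomial.smult (A t) (\<Sum>k<degree h. Polynomial.smult (coords h \<alpha> (u t) k) (\<alpha> k)))"
    using coords_spec[OF B u] by (intro sum.cong) auto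
  also have "\<dots> = (\<Sum>t<s. \<Sum>k<degree h. Polynomial.smult (A t * coords h \<alpha> (u t) k) (\<alpha> k))"
    by (simp add: smult_sum_right)
  also have "\<dots> = (\<Sum>k<degree h. \<Sum>t<s. Polynomial.smult (A t * coords h \<alpha> (u t) k) (\<alpha> k))"
    by (rule sum.swap)
  also have "\<dots> = (\<Sum>k<degree h. Polynomial.smult (\<Sum>t<s. A t * coords h \<alpha> (u t) k) (\<alpha> k))"
    by (simp add: smult_sum)
  finally show "(\<Sum>t<s. Polynomial.smult (A t) (u t)) = (\<Sum>k<degree h. Polynomial.smult (\<Sum>t<s. A t * coords h \<alpha> (u t) k) (\<alpha> k))" .
qed

lemma rk_cong:
  assumes "\<forall>j<s. u j = v j" shows "rk h \<alpha> s u = rk h \<alpha> s v"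
  unfolding rk_def by (rule snf_rank_cong) (use assms in \<open>auto simp: eqon_def\<close>)

lemma rk_invariant:
  assumes B: "is_R_basis h \<alpha>" and d: "0 < degree h" and u: "\<And>t. t < s \<Longrightarrow> u t \<in> S_set h"
    and A: "inv_mat s A"
  shows "rk h \<alpha> s (\<lambda>j. \<Sum>t<s. Polynomial.smult (A t j) (u t)) = rk h \<alpha> s u"
proof -
  have "(\<lambda>i j. coords h \<alpha> (\<Sum>t<s. Polynomial.smult (A t j) (u t)) i) = mm s (\<lambda>i j. coords h \<alpha> (u j) i) A"
  proof (intro ext)
    fix i j
    show "coords h \<alpha> (\<Sum>t<s. Polynomial.smult (A t j) (u t)) i = mm s (\<lambda>i j. coords h \<alpha> (u j) i) A i j"
      using fun_cong[OF coords_lin[where s=s and u=u and A="\<lambda>t. A t j", OF B d u], of i] by (simp add: mm_def mult.commute)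
  qed
  then show ?thesis unfolding rk_def using snf_rank_right[OF A] by simp
qed

lemma rk_le_wt:
  assumes cr: "chain_ring TYPE('r::comm_ring_1)" and B: "is_R_basis h \<alpha>" and d: "0 < degree h"
    and u: "\<And>t. t < s \<Longrightarrow> (u t :: 'r poly) \<in> S_set h"
  shows "rk h \<alpha> s u \<le> card {j. j < s \<and> u j \<noteq> 0}"
proof -
  have "rk h \<alpha> s u \<le> card {j. j < s \<and> (\<exists>i<degree h. coords h \<alpha> (u j) i \<noteq> 0)}"
    unfolding rk_def by (rule snf_rank_lower[OF chain_tot[OF cr]])
  also have "\<dots> \<le> card {j. j < s \<and> u j \<noteq> 0}"
  proof (rule card_mono)
    show "{j. j < s \<and> (\<exists>i<degree h. coords h \<alpha> (u j) i \<noteq> 0)} \<subseteq> {j. j < s \<and> u j \<noteq> 0}"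
    proof
      fix j assume "j \<in> {j. j < s \<and> (\<exists>i<degree h. coords h \<alpha> (u j) i \<noteq> 0)}"
      then obtain i where "j < s" "coords h \<alpha> (u j) i \<noteq> 0" by blast
      then show "j \<in> {j. j < s \<and> u j \<noteq> 0}" using coords_zero[OF B d, of i] by auto
    qed
  qed simp
  finally show ?thesis .
qed

lemma rk_attain:
  assumes cr: "chain_ring TYPE('r::comm_ring_1)" and B: "is_R_basis h \<alpha>" and d: "0 < degree h"
    and u: "\<And>t. t < s \<Longrightarrow> (u t :: 'r poly) \<in> S_set h"
  shows "\<exists>A. inv_mat s A \<and> card {j. j < s \<and> (\<Sum>t<s. Polynomial.smult (A t j) (u t)) \<noteq> 0} \<le> rk h \<alpha> s u"
proof -
  obtain Q where Q: "inv_mat s Q"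
    "card {j. j < s \<and> (\<exists>i<degree h. mm s (\<lambda>i j. coords h \<alpha> (u j) i) Q i j \<noteq> 0)} \<le> rk h \<alpha> s u"
    using snf_rank_upper[OF chain_tot(1)[OF cr]] unfolding rk_def by blast
  have "{j. j < s \<and> (\<Sum>t<s. Polynomial.smult (Q t j) (u t)) \<noteq> 0} \<subseteq>
        {j. j < s \<and> (\<exists>i<degree h. mm s (\<lambda>i j. coords h \<alpha> (u j) i) Q i j \<noteq> 0)}"
  proof
    fix j assume "j \<in> {j. j < s \<and> (\<Sum>t<s. Polynomial.smult (Q t j) (u t)) \<noteq> 0}"
    then have j: "j < s" "(\<Sum>t<s. Polynomial.smult (Q t j) (u t)) \<noteq> 0" by auto
    have S: "(\<Sum>t<s. Polynomial.smult (Q t j) (u t)) \<in> S_set h" by (rule S_lin[OF d u])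
    have "\<not> (\<forall>i<degree h. coords h \<alpha> (\<Sum>t<s. Polynomial.smult (Q t j) (u t)) i = 0)"
      using zero_if_coords[OF B S] j(2) by blast
    then obtain i where i: "i < degree h" "coords h \<alpha> (\<Sum>t<s. Polynomial.smult (Q t j) (u t)) i \<noteq> 0" by blast
    have "coords h \<alpha> (\<Sum>t<s. Polynomial.smult (Q t j) (u t)) i = mm s (\<lambda>i j. coords h \<alpha> (u j) i) Q i j"
      using fun_cong[OF coords_lin[where s=s and u=u and A="\<lambda>t. Q t j", OF B d u], of i] by (simp add: mm_def mult.commute)
    then show "j \<in> {j. j < s \<and> (\<exists>i<degree h. mm s (\<lambda>i j. coords h \<alpha> (u j) i) Q i j \<noteq> 0)}"
      using i j by auto
  qed
  note sub = this
  have "card {j. j < s \<and> (\<Sum>t<s. Polynomial.smult (Q t j) (u t)) \<noteq> 0} \<le> rk h \<alpha> s u"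
    by (rule le_trans[OF card_mono[OF _ sub] Q(2)]) simp
  then show ?thesis using Q(1) by blast
qed

lemma offs_Cons0: "offs (n0 # ns) 0 = 0" by (simp add: offs_def)
lemma offs_ConsS: "offs (n0 # ns) (Suc i) = n0 + offs ns i" by (simp add: offs_def)
lemma offs_Suc: "i < length ns \<Longrightarrow> offs ns (Suc i) = offs ns i + ns ! i"
  by (simp add: offs_def take_Suc_conv_app_nth)
lemma offs_mono: assumes "i \<le> j" shows "offs ns i \<le> offs ns j"
proof -
  have "take j ns = take i (take j ns) @ drop i (take j ns)" by (rule append_take_drop_id[symmetric])
  also have "take i (take j ns) = take i ns" using assms by (simp add: min_def)
  finally have "sum_list (take j ns) = sum_list (take i ns) + sum_list (drop i (take j ns))"
    by (metis sum_list_append)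
  then show ?thesis unfolding offs_def by simp
qed
lemma offs_len: "offs ns (length ns) = sum_list ns" by (simp add: offs_def)
lemma block_le: assumes "i < length ns" shows "offs ns i + ns ! i \<le> sum_list ns"
proof -
  have "offs ns (Suc i) \<le> offs ns (length ns)" using assms by (intro offs_mono) simp
  then show ?thesis using offs_Suc[OF assms] offs_len by simp
qed

lemma block_disj:
  assumes "i < length ns" "i' < length ns" "i \<noteq> i'" "offs ns i \<le> t" "t < offs ns i + ns ! i"
  shows "\<not> (offs ns i' \<le> t \<and> t < offs ns i' + ns ! i')"
proof (cases "i' < i")
  case True
  have "offs ns i' + ns ! i' = offs ns (Suc i')" using offs_Suc assms(2) by simp
  also have "\<dots> \<le> offs ns i" using True by (intro offs_mono) simp
  finally show ?thesis using assms by simp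
next
  case False
  then have "i < i'" using assms(3) by simp
  have "offs ns i + ns ! i = offs ns (Suc i)" using offs_Suc assms(1) by simp
  also have "\<dots> \<le> offs ns i'" using \<open>i < i'\<close> by (intro offs_mono) simp
  finally show ?thesis using assms by simp
qed

lemma block_cover: "t < sum_list ns \<Longrightarrow> \<exists>i<length ns. offs ns i \<le> t \<and> t < offs ns i + ns ! i"
proof (induction ns arbitrary: t)
  case Nil then show ?case by simp
next
  case (Cons n0 ns)
  show ?case
  proof (cases "t < n0")
    case True
    then show ?thesis by (intro exI[of _ 0]) (simp add: offs_Cons0)
  next
    case False
    then have "t - n0 < sum_list ns" using Cons.prems by simp
    then obtain i where i: "i < length ns" "offs ns i \<le> t - n0" "t - n0 < offs ns i + ns ! i"
      using Cons.IH by blast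
    have "n0 + offs ns i \<le> t" "t < n0 + offs ns i + ns ! i" using i False by linarith+
    then show ?thesis using i(1)
      by (intro exI[of _ "Suc i"]) (simp add: offs_ConsS)
  qed
qed

lemma card_split:
  "card {j. j < a + b \<and> P j} = card {j. j < a \<and> P j} + card {j::nat. j < b \<and> P (a + j)}"
proof -
  have eq: "{j. j < a + b \<and> P j} = {j. j < a \<and> P j} \<union> {j. a \<le> j \<and> j < a + b \<and> P j}" by auto
  have "card {j. j < a + b \<and> P j} = card {j. j < a \<and> P j} + card {j. a \<le> j \<and> j < a + b \<and> P j}"
    unfolding eq by (rule card_Un_disjoint) auto
  moreover have "bij_betw (\<lambda>j. a + j) {j. j < b \<and> P (a + j)} {j. a \<le> j \<and> j < a + b \<and> P j}"
    by (rule bij_betw_byWitness[where f'="\<lambda>j. j - a"]) auto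
  then have "card {j. j < b \<and> P (a + j)} = card {j. a \<le> j \<and> j < a + b \<and> P j}"
    by (rule bij_betw_same_card)
  ultimately show ?thesis by simp
qed

lemma card_blocks:
  "card {j. j < sum_list ns \<and> P j} = (\<Sum>i<length ns. card {j. j < ns ! i \<and> P (offs ns i + j)})"
proof (induction ns arbitrary: P)
  case Nil then show ?case by simp
next
  case (Cons n0 ns)
  have "card {j. j < sum_list (n0 # ns) \<and> P j} = card {j. j < n0 \<and> P j} + card {j. j < sum_list ns \<and> P (n0 + j)}"
    using card_split[of n0 "sum_list ns" P] by simp
  also have "card {j. j < sum_list ns \<and> P (n0 + j)} = (\<Sum>i<length ns. card {j. j < ns ! i \<and> P (n0 + (offs ns i + j))})"
    using Cons.IH[of "\<lambda>j. P (n0 + j)"] by simp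
  also have "card {j. j < n0 \<and> P j} + (\<Sum>i<length ns. card {j. j < ns ! i \<and> P (n0 + (offs ns i + j))}) =
      (\<Sum>i<length (n0 # ns). card {j. j < (n0 # ns) ! i \<and> P (offs (n0 # ns) i + j)})"
    unfolding length_Cons sum.lessThan_Suc_shift by (simp add: offs_Cons0 offs_ConsS add.assoc)
  finally show ?case .
qed

lemma bd_eval:
  assumes i: "i < length ns" and j: "j < ns ! i"
  shows "block_diag ns As t (offs ns i + j) =
    (if offs ns i \<le> t \<and> t < offs ns i + ns ! i then As i (t - offs ns i) j else 0)"
proof -
  let ?f = "\<lambda>i'. if offs ns i' \<le> t \<and> t < offs ns i' + ns ! i' \<and> offs ns i' \<le> offs ns i + j \<and> offs ns i + j < offs ns i' + ns ! i'
      then As i' (t - offs ns i') (offs ns i + j - offs ns i') else 0"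
  have "block_diag ns As t (offs ns i + j) = sum ?f {..<length ns}" unfolding block_diag_def by simp
  also have "\<dots> = ?f i + sum ?f ({..<length ns} - {i})"
    using i by (intro sum.remove) auto
  also have "sum ?f ({..<length ns} - {i}) = 0"
  proof (rule sum.neutral, rule ballI)
    fix i' assume "i' \<in> {..<length ns} - {i}"
    then have "i' < length ns" "i \<noteq> i'" by auto
    then have "\<not> (offs ns i' \<le> offs ns i + j \<and> offs ns i + j < offs ns i' + ns ! i')"
      using block_disj[OF i, of i' "offs ns i + j"] j by simp
    then show "?f i' = 0" by auto
  qed
  finally show ?thesis using j by simp
qed

lemma sum_shift_ivl: "(\<Sum>t\<in>{m0..<m0 + s}. g t) = (\<Sum>t<s. g (m0 + t::nat))"
  by (induct s) (simp_all add: atLeastLessThanSuc add.commute)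

lemma vm_block:
  assumes i: "i < length ns" and j: "j < ns ! i"
  shows "vec_mat (sum_list ns) c (block_diag ns As) (offs ns i + j) =
    (\<Sum>t<ns ! i. Polynomial.smult (As i t j) (c (offs ns i + t)))"
proof -
  let ?o = "offs ns i" and ?n = "sum_list ns" and ?s = "ns ! i"
  have le: "?o + ?s \<le> ?n" by (rule block_le[OF i])
  have "vec_mat ?n c (block_diag ns As) (?o + j) = (\<Sum>t<?n. Polynomial.smult (block_diag ns As t (?o + j)) (c t))"
    unfolding vec_mat_def using le j by simp
  also have "\<dots> = (\<Sum>t<?n. if ?o \<le> t \<and> t < ?o + ?s then Polynomial.smult (As i (t - ?o) j) (c t) else 0)"
    by (intro sum.cong) (auto simp: bd_eval[OF i j])
  also have "\<dots> = (\<Sum>t\<in>{..<?n} \<inter> {t. ?o \<le> t \<and> t < ?o + ?s}. Polynomial.smult (As i (t - ?o) j) (c t))"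
    by (simp add: sum.If_cases)
  also have "{..<?n} \<inter> {t. ?o \<le> t \<and> t < ?o + ?s} = {?o..<?o + ?s}" using le by auto
  also have "(\<Sum>t\<in>{?o..<?o + ?s}. Polynomial.smult (As i (t - ?o) j) (c t)) = (\<Sum>t<?s. Polynomial.smult (As i t j) (c (?o + t)))"
    by (simp add: sum_shift_ivl)
  finally show ?thesis .
qed

lemma vm_lin: "vec_mat n c M j - vec_mat n d M j = vec_mat n (\<lambda>j. c j - d j) M j"
  unfolding vec_mat_def by (simp add: sum_subtractf[symmetric] smult_diff_right)

lemma vm_S: "0 < degree h \<Longrightarrow> (\<forall>t<n. c t \<in> S_set h) \<Longrightarrow> vec_mat n c M j \<in> S_set h"
  unfolding vec_mat_def using S_lin[of h n c] S_zero[of h] by auto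

lemma vm_zero: "n \<le> j \<Longrightarrow> vec_mat n c M j = 0" unfolding vec_mat_def by simp

lemma sum_smult_idm: fixes s :: nat shows
  "j < s \<Longrightarrow> (\<Sum>t<s. Polynomial.smult (idm t j) (u t)) = u j"
proof -
  assume j: "j < s"
  have "(\<Sum>t<s. Polynomial.smult (idm t j) (u t)) = (\<Sum>t<s. if t = j then u t else 0)"
    by (intro sum.cong) (auto simp: idm_def)
  then show ?thesis using j by simp
qed

lemma vm_id:
  assumes c: "c \<in> Sn h (sum_list ns)"
  shows "vec_mat (sum_list ns) c (block_diag ns (\<lambda>_. idm)) = c"
proof (rule ext)
  fix j
  show "vec_mat (sum_list ns) c (block_diag ns (\<lambda>_. idm)) j = c j"
  proof (cases "j < sum_list ns")
    case True
    then obtain i where i: "i < length ns" "offs ns i \<le> j" "j < offs ns i + ns ! i" using block_cover by blast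
    define j' where "j' = j - offs ns i"
    have jj: "j = offs ns i + j'" "j' < ns ! i" using i unfolding j'_def by auto
    show ?thesis unfolding jj(1) vm_block[OF i(1) jj(2)] using sum_smult_idm[OF jj(2), where u="\<lambda>t. c (offs ns i + t)"] by simp
  next
    case False
    then show ?thesis using c vm_zero[of "sum_list ns" j] unfolding Sn_def by simp
  qed
qed

lemma inv_kill:
  assumes A: "inv_mat s A" and z: "\<forall>j<s. (\<Sum>t<s. Polynomial.smult (A t j) (u t)) = 0" and t': "t' < s"
  shows "u t' = 0"
proof -
  obtain B where B: "eqon s s (mm s A B) idm" using A inv_mat_iff by blast
  have "0 = (\<Sum>j<s. Polynomial.smult (B j t') (\<Sum>t<s. Polynomial.smult (A t j) (u t)))"
    using z by simp
  also have "\<dots> = (\<Sum>j<s. \<Sum>t<s. Polynomial.smult (A t j * B j t') (u t))"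
    by (simp add: smult_sum_right mult.commute)
  also have "\<dots> = (\<Sum>t<s. \<Sum>j<s. Polynomial.smult (A t j * B j t') (u t))" by (rule sum.swap)
  also have "\<dots> = (\<Sum>t<s. Polynomial.smult (mm s A B t t') (u t))"
    by (simp add: smult_sum mm_def)
  also have "\<dots> = (\<Sum>t<s. Polynomial.smult (idm t t') (u t))"
    using B t' unfolding eqon_def by (intro sum.cong) auto
  also have "\<dots> = u t'" by (rule sum_smult_idm[OF t'])
  finally show ?thesis by simp
qed

lemma vm_inj:
  assumes As: "\<forall>i<length ns. inv_mat (ns ! i) (As i)"
    and c: "c \<in> Sn h (sum_list ns)" and d: "d \<in> Sn h (sum_list ns)"
    and eq: "vec_mat (sum_list ns) c (block_diag ns As) = vec_mat (sum_list ns) d (block_diag ns As)"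
  shows "c = d"
proof (rule ext)
  fix j
  let ?n = "sum_list ns" and ?e = "\<lambda>j. c j - d j"
  have ez: "vec_mat ?n ?e (block_diag ns As) x = 0" for x
    using vm_lin[of ?n c "block_diag ns As" x d] eq by simp
  show "c j = d j"
  proof (cases "j < ?n")
    case True
    then obtain i where i: "i < length ns" "offs ns i \<le> j" "j < offs ns i + ns ! i" using block_cover by blast
    define j' where "j' = j - offs ns i"
    have jj: "j = offs ns i + j'" "j' < ns ! i" using i unfolding j'_def by auto
    have "\<forall>jj<ns ! i. (\<Sum>t<ns ! i. Polynomial.smult (As i t jj) (?e (offs ns i + t))) = 0"
    proof (intro allI impI)
      fix jj assume jj: "jj < ns ! i"
      show "(\<Sum>t<ns ! i. Polynomial.smult (As i t jj) (?e (offs ns i + t))) = 0"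
        using ez[of "offs ns i + jj"] vm_block[OF i(1) jj, of ?e As] by simp
    qed
    then have "?e (offs ns i + j') = 0"
      using inv_kill[OF As[rule_format, OF i(1)], of "\<lambda>t. ?e (offs ns i + t)" j'] jj(2) by simp
    then show ?thesis using jj(1) by simp
  next
    case False
    then show ?thesis using c d unfolding Sn_def by simp
  qed
qed

lemma blk_S:
  assumes "\<forall>t<sum_list ns. e t \<in> S_set h" "i < length ns" "t < ns ! i"
  shows "e (offs ns i + t) \<in> S_set h"
  using assms block_le[OF assms(2)] by simp

lemma wtSR_inv:
  assumes B: "is_R_basis h \<alpha>" and d: "0 < degree h"
    and As: "\<forall>i<length ns. inv_mat (ns ! i) (As i)"
    and e: "\<forall>t<sum_list ns. e t \<in> S_set h"
  shows "wt_SR h \<alpha> ns (vec_mat (sum_list ns) e (block_diag ns As)) = wt_SR h \<alpha> ns e"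
  unfolding wt_SR_def
proof (rule sum.cong[OF refl])
  fix i assume "i \<in> {..<length ns}"
  then have i: "i < length ns" by simp
  have "rk h \<alpha> (ns ! i) (\<lambda>j. vec_mat (sum_list ns) e (block_diag ns As) (offs ns i + j)) =
        rk h \<alpha> (ns ! i) (\<lambda>j. \<Sum>t<ns ! i. Polynomial.smult (As i t j) (e (offs ns i + t)))"
    by (rule rk_cong) (simp add: vm_block[OF i])
  also have "\<dots> = rk h \<alpha> (ns ! i) (\<lambda>j. e (offs ns i + j))"
    by (rule rk_invariant[OF B d _ As[rule_format, OF i], where u="\<lambda>t. e (offs ns i + t)"])
       (rule blk_S[OF e i])
  finally show "rk h \<alpha> (ns ! i) (\<lambda>j. vec_mat (sum_list ns) e (block_diag ns As) (offs ns i + j)) =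
        rk h \<alpha> (ns ! i) (\<lambda>j. e (offs ns i + j))" .
qed

lemma wtSR_le:
  assumes cr: "chain_ring TYPE('r::comm_ring_1)" and B: "is_R_basis h \<alpha>" and d: "0 < degree h"
    and e: "\<forall>t<sum_list ns. (e t :: 'r poly) \<in> S_set h"
  shows "wt_SR h \<alpha> ns e \<le> card {j. j < sum_list ns \<and> e j \<noteq> 0}"
  unfolding wt_SR_def card_blocks[of ns "\<lambda>j. e j \<noteq> 0"]
proof (rule sum_mono)
  fix i assume "i \<in> {..<length ns}"
  then have i: "i < length ns" by simp
  show "rk h \<alpha> (ns ! i) (\<lambda>j. e (offs ns i + j)) \<le> card {j. j < ns ! i \<and> e (offs ns i + j) \<noteq> 0}"
    by (rule rk_le_wt[OF cr B d]) (rule blk_S[OF e i])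
qed

lemma wtSR_attain:
  assumes cr: "chain_ring TYPE('r::comm_ring_1)" and B: "is_R_basis h \<alpha>" and d: "0 < degree h"
    and e: "\<forall>t<sum_list ns. (e t :: 'r poly) \<in> S_set h"
  shows "\<exists>As. (\<forall>i<length ns. inv_mat (ns ! i) (As i)) \<and>
     card {j. j < sum_list ns \<and> vec_mat (sum_list ns) e (block_diag ns As) j \<noteq> 0} \<le> wt_SR h \<alpha> ns e"
proof -
  have "\<forall>i. \<exists>A. i < length ns \<longrightarrow> inv_mat (ns ! i) A \<and>
      card {j. j < ns ! i \<and> (\<Sum>t<ns ! i. Polynomial.smult (A t j) (e (offs ns i + t))) \<noteq> 0}
        \<le> rk h \<alpha> (ns ! i) (\<lambda>j. e (offs ns i + j))"
  proof
    fix i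
    show "\<exists>A. i < length ns \<longrightarrow> inv_mat (ns ! i) A \<and>
      card {j. j < ns ! i \<and> (\<Sum>t<ns ! i. Polynomial.smult (A t j) (e (offs ns i + t))) \<noteq> 0}
        \<le> rk h \<alpha> (ns ! i) (\<lambda>j. e (offs ns i + j))"
    proof (cases "i < length ns")
      case True
      then show ?thesis using rk_attain[OF cr B d, where s="ns ! i" and u="\<lambda>t. e (offs ns i + t)"]
        blk_S[OF e True] by blast
    qed simp
  qed
  then obtain As where As: "\<forall>i. i < length ns \<longrightarrow> inv_mat (ns ! i) (As i) \<and>
      card {j. j < ns ! i \<and> (\<Sum>t<ns ! i. Polynomial.smult (As i t j) (e (offs ns i + t))) \<noteq> 0}
        \<le> rk h \<alpha> (ns ! i) (\<lambda>j. e (offs ns i + j))"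
    by (rule choice[THEN exE]) blast
  have "card {j. j < sum_list ns \<and> vec_mat (sum_list ns) e (block_diag ns As) j \<noteq> 0} =
     (\<Sum>i<length ns. card {j. j < ns ! i \<and> vec_mat (sum_list ns) e (block_diag ns As) (offs ns i + j) \<noteq> 0})"
    by (rule card_blocks)
  also have "\<dots> = (\<Sum>i<length ns. card {j. j < ns ! i \<and> (\<Sum>t<ns ! i. Polynomial.smult (As i t j) (e (offs ns i + t))) \<noteq> 0})"
  proof (rule sum.cong[OF refl])
    fix i assume "i \<in> {..<length ns}"
    then have i: "i < length ns" by simp
    show "card {j. j < ns ! i \<and> vec_mat (sum_list ns) e (block_diag ns As) (offs ns i + j) \<noteq> 0} =
      card {j. j < ns ! i \<and> (\<Sum>t<ns ! i. Polynomial.smult (As i t j) (e (offs ns i + t))) \<noteq> 0}"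
      by (rule arg_cong[where f=card]) (auto simp: vm_block[OF i])
  qed
  also have "\<dots> \<le> wt_SR h \<alpha> ns e" unfolding wt_SR_def
    by (rule sum_mono) (use As in auto)
  finally show ?thesis using As by blast
qed

lemma singleton_bound:
  assumes d: "0 < degree h" and fS: "finite (S_set h)" and S2: "2 \<le> card (S_set h)"
    and D: "D \<subseteq> Sn h n" and cD: "card D = card (S_set h) ^ k" and k: "1 \<le> k"
  shows "k \<le> n \<and> (\<exists>c\<in>D. \<exists>e\<in>D. c \<noteq> e \<and> card {j. j < n \<and> c j \<noteq> e j} \<le> n + 1 - k)"
proof -
  let ?S = "S_set h"
  let ?g = "\<lambda>c::nat \<Rightarrow> _. map c [0..<k - 1]"
  have allS: "c j \<in> ?S" if "c \<in> D" for c j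
    using that D S_zero[OF d] unfolding Sn_def by (cases "j < n") auto
  have "?g ` D \<subseteq> {xs. set xs \<subseteq> ?S \<and> length xs = k - 1}" using allS by auto
  then have "card (?g ` D) \<le> card {xs. set xs \<subseteq> ?S \<and> length xs = k - 1}"
    by (rule card_mono[rotated]) (simp add: finite_lists_length_eq fS)
  also have "\<dots> = card ?S ^ (k - 1)" by (rule card_lists_length_eq[OF fS])
  also have "\<dots> < card ?S ^ k" using S2 k by (intro power_strict_increasing) auto
  finally have "card (?g ` D) < card D" using cD by simp
  then have "\<not> inj_on ?g D" using card_image by force
  then obtain c e where ce: "c \<in> D" "e \<in> D" "c \<noteq> e" "?g c = ?g e" unfolding inj_on_def by blast
  have agree: "c j = e j" if "j < k - 1" for j
    using ce(4) that by (simp add: map_eq_conv)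
  have sub: "{j. j < n \<and> c j \<noteq> e j} \<subseteq> {k - 1..<n}"
  proof
    fix x assume "x \<in> {j. j < n \<and> c j \<noteq> e j}"
    then have "x < n" "c x \<noteq> e x" by auto
    then have "\<not> x < k - 1" using agree by blast
    then show "x \<in> {k - 1..<n}" using \<open>x < n\<close> by simp
  qed
  have kn: "k \<le> n"
  proof (rule ccontr)
    assume "\<not> k \<le> n"
    have "c j = e j" for j
    proof (cases "j < n")
      case True then show ?thesis using agree \<open>\<not> k \<le> n\<close> by simp
    next
      case False
      have "c \<in> Sn h n" "e \<in> Sn h n" using ce(1,2) D by auto
      then show ?thesis using False unfolding Sn_def by simp
    qed
    then show False using ce(3) by auto
  qed
  have "card {j. j < n \<and> c j \<noteq> e j} \<le> card {k - 1..<n}" by (rule card_mono[OF _ sub]) simp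
  also have "\<dots> = n + 1 - k" using k kn by simp
  finally show ?thesis using kn ce by blast
qed

lemma finite_pairs: "finite D \<Longrightarrow> finite {f c e | c e. c \<in> D \<and> e \<in> D \<and> c \<noteq> e}"
proof -
  assume "finite D"
  moreover have "{f c e | c e. c \<in> D \<and> e \<in> D \<and> c \<noteq> e} \<subseteq> (\<lambda>p. f (fst p) (snd p)) ` (D \<times> D)" by force
  ultimately show ?thesis by (meson finite_SigmaI finite_imageI finite_subset)
qed

lemma dH_le: "finite D \<Longrightarrow> c \<in> D \<Longrightarrow> e \<in> D \<Longrightarrow> c \<noteq> e \<Longrightarrow> d_H n D \<le> card {j. j < n \<and> c j \<noteq> e j}"
  unfolding d_H_def by (rule Min_le) (auto intro: finite_pairs)

lemma dH_in: "finite D \<Longrightarrow> c \<in> D \<Longrightarrow> e \<in> D \<Longrightarrow> c \<noteq> e \<Longrightarrow>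
   \<exists>c'\<in>D. \<exists>e'\<in>D. c' \<noteq> e' \<and> d_H n D = card {j. j < n \<and> c' j \<noteq> e' j}"
proof -
  assume a: "finite D" "c \<in> D" "e \<in> D" "c \<noteq> e"
  have "d_H n D \<in> {card {j. j < n \<and> c j \<noteq> e j} | c e. c \<in> D \<and> e \<in> D \<and> c \<noteq> e}"
    unfolding d_H_def by (rule Min_in) (use a in \<open>auto intro: finite_pairs\<close>)
  then show ?thesis by blast
qed

lemma dSR_le: "finite C \<Longrightarrow> c \<in> C \<Longrightarrow> e \<in> C \<Longrightarrow> c \<noteq> e \<Longrightarrow> d_SR h \<alpha> ns C \<le> wt_SR h \<alpha> ns (\<lambda>j. c j - e j)"
  unfolding d_SR_def by (rule Min_le) (auto intro: finite_pairs)

lemma dSR_in: "finite C \<Longrightarrow> c \<in> C \<Longrightarrow> e \<in> C \<Longrightarrow> c \<noteq> e \<Longrightarrow>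
   \<exists>c'\<in>C. \<exists>e'\<in>C. c' \<noteq> e' \<and> d_SR h \<alpha> ns C = wt_SR h \<alpha> ns (\<lambda>j. c' j - e' j)"
proof -
  assume a: "finite C" "c \<in> C" "e \<in> C" "c \<noteq> e"
  have "d_SR h \<alpha> ns C \<in> {wt_SR h \<alpha> ns (\<lambda>j. c j - e j) | c e. c \<in> C \<and> e \<in> C \<and> c \<noteq> e}"
    unfolding d_SR_def by (rule Min_in) (use a in \<open>auto intro: finite_pairs\<close>)
  then show ?thesis by blast
qed

lemma card_vm_diff:
  "card {j. j < n \<and> vec_mat n c M j \<noteq> vec_mat n e M j} = card {j. j < n \<and> vec_mat n (\<lambda>j. c j - e j) M j \<noteq> 0}"
proof -
  have "vec_mat n c M j \<noteq> vec_mat n e M j \<longleftrightarrow> vec_mat n (\<lambda>j. c j - e j) M j \<noteq> 0" for j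
  proof -
    have "vec_mat n (\<lambda>j. c j - e j) M j = vec_mat n c M j - vec_mat n e M j" by (rule vm_lin[symmetric])
    then show ?thesis by simp
  qed
  then show ?thesis by simp
qed

theorem lemma3:
  fixes h :: "'r::{comm_ring_1, finite} poly"
    and \<alpha> :: "nat \<Rightarrow> 'r poly"
    and ns :: "nat list"
    and C :: "(nat \<Rightarrow> 'r poly) set"
  assumes "chain_ring TYPE('r)"
    and "lead_coeff h = 1"
    and "irred_mod_m h"
    and "is_R_basis h \<alpha>"
    and "C \<subseteq> Sn h (sum_list ns)"
    and "\<exists>k::nat. k > 0 \<and> log (card (S_set h)) (card C) = real k"
  shows "is_MSRD h \<alpha> ns C \<longleftrightarrow>
    (\<forall>As. (\<forall>i<length ns. inv_mat (ns ! i) (As i)) \<longrightarrow>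
       is_MDS h (sum_list ns)
         ((\<lambda>c. vec_mat (sum_list ns) c (block_diag ns As)) ` C))"
proof -
  note cr = assms(1) and B = assms(4) and CS = assms(5)
  let ?n = "sum_list ns" and ?S = "S_set h"
  obtain k where k: "k > 0" "log (card ?S) (card C) = real k" using assms(6) by blast
  have cS0: "card ?S \<noteq> 0"
  proof
    assume "card ?S = 0"
    then have "log (card ?S) (card C) = 0" by (simp add: log_def)
    with k show False by simp
  qed
  have cS1: "card ?S \<noteq> 1"
  proof
    assume "card ?S = 1"
    then have "log (card ?S) (card C) = 0" by (simp add: log_def)
    with k show False by simp
  qed
  have cS2: "2 \<le> card ?S" using cS0 cS1 by linarith
  have fS: "finite ?S"
  proof (rule ccontr)
    assume "infinite ?S" then have "card ?S = 0" by simp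
    with cS0 show False by simp
  qed
  have dpos: "0 < degree h"
  proof -
    have "?S \<noteq> {}" using cS0 by (intro notI) simp
    then obtain p where "p \<in> ?S" by blast
    then show ?thesis unfolding S_set_def by simp
  qed
  have cC0: "card C \<noteq> 0"
  proof
    assume "card C = 0"
    then have "log (card ?S) (card C) = 0" by (simp add: log_def)
    with k show False by simp
  qed
  have fC: "finite C"
  proof (rule ccontr)
    assume "infinite C" then have "card C = 0" by simp
    with cC0 show False by simp
  qed
  have cC: "card C = card ?S ^ k"
  proof -
    have "real (card C) = real (card ?S) powr (log (card ?S) (card C))"
      by (rule powr_log_cancel[symmetric]) (use cS0 cS1 cC0 in auto)
    also have "\<dots> = real (card ?S) ^ k" unfolding k(2) using cS0 by (simp add: powr_realpow)
    finally have "real (card C) = real (card ?S ^ k)" by simp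
    then show ?thesis by (simp only: of_nat_eq_iff)
  qed
  have k1: "1 \<le> k" using k(1) by simp
  obtain kn: "k \<le> ?n" and pairC: "\<exists>c\<in>C. \<exists>e\<in>C. c \<noteq> e \<and> card {j. j < ?n \<and> c j \<noteq> e j} \<le> ?n + 1 - k"
    using singleton_bound[OF dpos fS cS2 CS cC k1] by blast
  have Cent: "\<forall>t<?n. c t \<in> ?S" if "c \<in> C" for c using that CS unfolding Sn_def by auto
  have diffS: "\<forall>t<?n. c t - e t \<in> ?S" if "c \<in> C" "e \<in> C" for c e
    using Cent[OF that(1)] Cent[OF that(2)] S_diff by blast
  have img: "(\<lambda>c. vec_mat ?n c (block_diag ns As)) ` C \<subseteq> Sn h ?n \<and>
      card ((\<lambda>c. vec_mat ?n c (block_diag ns As)) ` C) = card C \<and>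
      finite ((\<lambda>c. vec_mat ?n c (block_diag ns As)) ` C)"
    if As: "\<forall>i<length ns. inv_mat (ns ! i) (As i)" for As
  proof (intro conjI)
    show "(\<lambda>c. vec_mat ?n c (block_diag ns As)) ` C \<subseteq> Sn h ?n"
    proof
      fix x assume "x \<in> (\<lambda>c. vec_mat ?n c (block_diag ns As)) ` C"
      then obtain c where c: "c \<in> C" "x = vec_mat ?n c (block_diag ns As)" by blast
      have "\<forall>j<?n. x j \<in> ?S" using vm_S[OF dpos Cent[OF c(1)]] c(2) by blast
      moreover have "\<forall>j\<ge>?n. x j = 0" using vm_zero c(2) by blast
      ultimately show "x \<in> Sn h ?n" unfolding Sn_def by blast
    qed
    have "inj_on (\<lambda>c. vec_mat ?n c (block_diag ns As)) C"
    proof (rule inj_onI)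
      fix c e assume "c \<in> C" "e \<in> C" "vec_mat ?n c (block_diag ns As) = vec_mat ?n e (block_diag ns As)"
      then show "c = e" using vm_inj[OF As] CS by blast
    qed
    then show "card ((\<lambda>c. vec_mat ?n c (block_diag ns As)) ` C) = card C" by (rule card_image)
    show "finite ((\<lambda>c. vec_mat ?n c (block_diag ns As)) ` C)" using fC by simp
  qed
  have rk: "real (?n + 1 - k) = real ?n - real k + 1" using kn by (simp add: of_nat_diff)
  have MDS_iff: "is_MDS h ?n D \<longleftrightarrow> d_H ?n D = ?n + 1 - k" if "card D = card C" for D
  proof -
    have "is_MDS h ?n D \<longleftrightarrow> real (d_H ?n D) = real (?n + 1 - k)"
      unfolding is_MDS_def that k(2) rk by simp
    also have "\<dots> \<longleftrightarrow> d_H ?n D = ?n + 1 - k" by (rule of_nat_eq_iff)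
    finally show ?thesis .
  qed
  have MSRD_iff: "is_MSRD h \<alpha> ns C \<longleftrightarrow> d_SR h \<alpha> ns C = ?n + 1 - k"
  proof
    assume "is_MSRD h \<alpha> ns C"
    then obtain k' where "k' > 0" "log (card ?S) (card C) = real k'" "d_SR h \<alpha> ns C = ?n - k' + 1"
      unfolding is_MSRD_def by blast
    then show "d_SR h \<alpha> ns C = ?n + 1 - k" using k(2) kn by simp
  next
    assume "d_SR h \<alpha> ns C = ?n + 1 - k"
    then show "is_MSRD h \<alpha> ns C" unfolding is_MSRD_def using k kn by (intro exI[of _ k]) simp
  qed
  show ?thesis
  proof
    assume "is_MSRD h \<alpha> ns C"
    then have dsr: "d_SR h \<alpha> ns C = ?n + 1 - k" using MSRD_iff by blast
    show "\<forall>As. (\<forall>i<length ns. inv_mat (ns ! i) (As i)) \<longrightarrow>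
       is_MDS h ?n ((\<lambda>c. vec_mat ?n c (block_diag ns As)) ` C)"
    proof (intro allI impI)
      fix As :: "nat \<Rightarrow> nat \<Rightarrow> nat \<Rightarrow> 'r" assume As: "\<forall>i<length ns. inv_mat (ns ! i) (As i)"
      let ?f = "\<lambda>c. vec_mat ?n c (block_diag ns As)"
      note P = img[OF As]
      have P1: "?f ` C \<subseteq> Sn h ?n" using P by (rule conjunct1)
      have P2: "card (?f ` C) = card ?S ^ k" using P cC by simp
      have P3: "finite (?f ` C)" using P by simp
      have sb: "k \<le> ?n \<and> (\<exists>c\<in>?f ` C. \<exists>e\<in>?f ` C. c \<noteq> e \<and> card {j. j < ?n \<and> c j \<noteq> e j} \<le> ?n + 1 - k)"
        by (rule singleton_bound[OF dpos fS cS2 P1 P2 k1])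
      then obtain c' e' where ce': "c' \<in> ?f ` C" "e' \<in> ?f ` C" "c' \<noteq> e'"
        "card {j. j < ?n \<and> c' j \<noteq> e' j} \<le> ?n + 1 - k"
        by blast
      have le: "d_H ?n (?f ` C) \<le> ?n + 1 - k"
        using le_trans[OF dH_le[OF P3 ce'(1-3), of ?n] ce'(4)] .
      obtain c'' e'' where ce'': "c'' \<in> ?f ` C" "e'' \<in> ?f ` C" "c'' \<noteq> e''"
        "d_H ?n (?f ` C) = card {j. j < ?n \<and> c'' j \<noteq> e'' j}"
        using dH_in[OF P3 ce'(1-3), of ?n] by blast
      obtain c where c: "c \<in> C" "c'' = ?f c" using ce''(1) by (rule imageE) simp
      obtain e where e: "e \<in> C" "e'' = ?f e" using ce''(2) by (rule imageE) simp
      have ce: "c \<in> C" "e \<in> C" "c'' = ?f c" "e'' = ?f e" using c e by auto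
      have "c \<noteq> e" using ce''(3) ce(3,4) by auto
      have eS: "\<forall>t<?n. vec_mat ?n (\<lambda>j. c j - e j) (block_diag ns As) t \<in> ?S"
        using vm_S[OF dpos diffS[OF ce(1,2)]] by simp
      have "?n + 1 - k = d_SR h \<alpha> ns C" using dsr by simp
      also have "\<dots> \<le> wt_SR h \<alpha> ns (\<lambda>j. c j - e j)" by (rule dSR_le[OF fC ce(1,2) \<open>c \<noteq> e\<close>])
      also have "\<dots> = wt_SR h \<alpha> ns (vec_mat ?n (\<lambda>j. c j - e j) (block_diag ns As))"
        by (rule wtSR_inv[OF B dpos As diffS[OF ce(1,2)], symmetric])
      also have "\<dots> \<le> card {j. j < ?n \<and> vec_mat ?n (\<lambda>j. c j - e j) (block_diag ns As) j \<noteq> 0}"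
        by (rule wtSR_le[OF cr B dpos eS])
      also have "\<dots> = d_H ?n (?f ` C)" unfolding ce''(4) ce(3,4) card_vm_diff ..
      finally have ge: "?n + 1 - k \<le> d_H ?n (?f ` C)" .
      have "card (?f ` C) = card C" using P by simp
      then show "is_MDS h ?n (?f ` C)" using MDS_iff le ge by simp
    qed
  next
    assume H: "\<forall>As. (\<forall>i<length ns. inv_mat (ns ! i) (As i)) \<longrightarrow>
       is_MDS h ?n ((\<lambda>c. vec_mat ?n c (block_diag ns As)) ` C)"
    have id: "\<forall>i<length ns. inv_mat (ns ! i) ((\<lambda>_. (idm :: nat \<Rightarrow> nat \<Rightarrow> 'r)) i)" by (simp add: inv_mat_idm)
    have imgC: "(\<lambda>c. vec_mat ?n c (block_diag ns (\<lambda>_. idm))) ` C = C"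
    proof -
      have "(\<lambda>c. vec_mat ?n c (block_diag ns (\<lambda>_. idm))) ` C = (\<lambda>c. c) ` C"
        by (rule image_cong[OF refl]) (rule vm_id[OF subsetD[OF CS]])
      then show ?thesis by simp
    qed
    have "is_MDS h ?n ((\<lambda>c. vec_mat ?n c (block_diag ns (\<lambda>_. idm))) ` C)"
      using mp[OF spec[OF H, where x="\<lambda>_. idm"] id] by simp
    then have "is_MDS h ?n C" unfolding imgC .
    then have dHC: "d_H ?n C = ?n + 1 - k" using MDS_iff by blast
    have le: "d_SR h \<alpha> ns C \<le> ?n + 1 - k"
    proof -
      obtain c e where ce: "c \<in> C" "e \<in> C" "c \<noteq> e" "card {j. j < ?n \<and> c j \<noteq> e j} \<le> ?n + 1 - k"
        using pairC by blast
      have "d_SR h \<alpha> ns C \<le> wt_SR h \<alpha> ns (\<lambda>j. c j - e j)" by (rule dSR_le[OF fC ce(1-3)])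
      also have "\<dots> \<le> card {j. j < ?n \<and> c j - e j \<noteq> 0}" by (rule wtSR_le[OF cr B dpos diffS[OF ce(1,2)]])
      also have "\<dots> = card {j. j < ?n \<and> c j \<noteq> e j}" by simp
      finally show ?thesis using ce(4) by simp
    qed
    have ge: "?n + 1 - k \<le> d_SR h \<alpha> ns C"
    proof -
      obtain c0 e0 where ce0: "c0 \<in> C" "e0 \<in> C" "c0 \<noteq> e0" using pairC by blast
      obtain c e where ce: "c \<in> C" "e \<in> C" "c \<noteq> e" "d_SR h \<alpha> ns C = wt_SR h \<alpha> ns (\<lambda>j. c j - e j)"
        using dSR_in[OF fC ce0] by blast
      obtain As where As: "\<forall>i<length ns. inv_mat (ns ! i) (As i)"
        "card {j. j < ?n \<and> vec_mat ?n (\<lambda>j. c j - e j) (block_diag ns As) j \<noteq> 0} \<le> wt_SR h \<alpha> ns (\<lambda>j. c j - e j)"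
        using wtSR_attain[OF cr B dpos diffS[OF ce(1,2)]] by blast
      let ?f = "\<lambda>c. vec_mat ?n c (block_diag ns As)"
      note P = img[OF As(1)]
      have cf: "card (?f ` C) = card C" using P by simp
      have "d_H ?n (?f ` C) = ?n + 1 - k" using mp[OF spec[OF H, where x=As] As(1)] MDS_iff[OF cf] by blast
      have fne: "?f c \<noteq> ?f e"
      proof
        assume "?f c = ?f e"
        then have "c = e" by (rule vm_inj[OF As(1) subsetD[OF CS ce(1)] subsetD[OF CS ce(2)]])
        then show False using ce(3) by simp
      qed
      have "?n + 1 - k = d_H ?n (?f ` C)" using \<open>d_H ?n (?f ` C) = ?n + 1 - k\<close> by simp
      also have "\<dots> \<le> card {j. j < ?n \<and> ?f c j \<noteq> ?f e j}"
        by (rule dH_le) (use P ce fne in simp_all)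
      also have "\<dots> = card {j. j < ?n \<and> vec_mat ?n (\<lambda>j. c j - e j) (block_diag ns As) j \<noteq> 0}"
        by (rule card_vm_diff)
      also have "\<dots> \<le> wt_SR h \<alpha> ns (\<lambda>j. c j - e j)" by (rule As(2))
      finally show ?thesis using ce(4) by simp
    qed
    show "is_MSRD h \<alpha> ns C" using MSRD_iff le ge by simp
  qed
qed

end
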